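(* Let $f$ be analytic on $\mathcal{P}=\{z\in\mathbb{C}^n:|z-x_0|<\rho_0\}$, $x_0\in\mathbb{R}^n$, and real-valued on $\mathcal{P}\cap\mathbb{R}^n$. Let $M(k)=\max_{|\alpha|=k}\sup_{\mathcal{P}}|\partial^\alpha f|$. Assume $\mu_{x_0}:=\|\nabla f(x_0)\|>0$, and let $E_0=f(x_0)$. There is a sufficiently small constant $c(n)>0$ and a constant $C(n)$ such that the following holds. Let $$\rho_1\le c(n)\min(\rho_0,\mu_{x_0}M(2)^{-1}),\qquad r=c(n)\rho_1,\qquad r'=c(n)\rho_1\min(1,\mu_{x_0}).$$ Then for any $(w,E)\in\mathbb{C}^{n-1}\times\mathbb{C}$ with $|w|<r$, $|E-E_0|<r'$, the equation $f(\varphi(\xi,w;x_0))=E$ has a unique solution $\xi=g(w,E)$ with $|\xi|<\rho_1$, and $g$ is analytic in $(w,E)$. Moreover: (a) for all such $(w,E)$, $|g(w,E)|\le2\mu_{x_0}^{-1}(|E-E_0|+C(n)M(2)|w|^2)$; (b) for any $x_0'\in\mathbb{R}^n$ with $\|x_0'-x_0\|<r$ and $f(x_0')=E$ for some $|E-E_0|<r'$, there exists $y\in\mathbb{R}^{n-1}$ with $\|y\|\le\|x_0'-x_0\|$ and $x_0'=\varphi(g(y,E),y;x_0)$.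
   Context: $|\cdot|$ is the sup-norm and $\|\cdot\|$ the Euclidean norm. Normal coordinates: for $x_0$ with $\mu_{x_0}=\|\nabla f(x_0)\|>0$, let $\mathfrak{n}_{x_0}=\mu_{x_0}^{-1}\nabla f(x_0)$, let $\mathfrak{e}_{x_0,1},\dots,\mathfrak{e}_{x_0,n-1}$ be an orthonormal basis of $\{\mathfrak{n}_{x_0}\}^\perp\subset\mathbb{R}^n$, and for $(\xi,y)$ (real or complex) set $\varphi(\xi,y;x_0)=x_0+\xi\mathfrak{n}_{x_0}+\sum_{j=1}^{n-1}y_j\mathfrak{e}_{x_0,j}$. *)

theory Defs
  imports "HOL-Analysis.Analysis"
begin

definition supn :: "('a::real_normed_vector)^'n \<Rightarrow> real" where
  "supn z = Max (range (\<lambda>i. norm (z $ i)))"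

definition cvec :: "real^'n \<Rightarrow> complex^'n" where
  "cvec x = (\<chi> i. complex_of_real (x $ i))"

definition cscale :: "complex \<Rightarrow> complex^'n \<Rightarrow> complex^'n" where
  "cscale a v = (\<chi> i. a * v $ i)"

text \<open>Holomorphy (complex differentiability) on an open set: Frechet derivative exists
  and is complex linear, where J is the multiplication by i on the domain.\<close>
definition cdiff_on :: "('a::real_normed_vector \<Rightarrow> complex) \<Rightarrow> ('a \<Rightarrow> 'a) \<Rightarrow> 'a set \<Rightarrow> bool" where
  "cdiff_on F J S \<longleftrightarrow> open S \<and>
     (\<forall>z\<in>S. \<exists>D. (F has_derivative D) (at z) \<and> (\<forall>h. D (J h) = \<i> * D h))"

definition analytic_vec_on :: "(complex^'n \<Rightarrow> complex) \<Rightarrow> (complex^'n) set \<Rightarrow> bool" where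
  "analytic_vec_on F S = cdiff_on F (cscale \<i>) S"

definition analytic_pair_on :: "(complex^'m \<Rightarrow> complex \<Rightarrow> complex) \<Rightarrow> ((complex^'m) \<times> complex) set \<Rightarrow> bool" where
  "analytic_pair_on G S = cdiff_on (\<lambda>(w,E). G w E) (\<lambda>(w,E). (cscale \<i> w, \<i> * E)) S"

definition cpd :: "'n \<Rightarrow> (complex^'n \<Rightarrow> complex) \<Rightarrow> complex^'n \<Rightarrow> complex" where
  "cpd i F z = deriv (\<lambda>t. F (z + axis i t)) 0"

definition rgrad :: "(complex^'n \<Rightarrow> complex) \<Rightarrow> real^'n \<Rightarrow> real^'n" where
  "rgrad F x = (\<chi> i. deriv (\<lambda>t. Re (F (cvec (x + axis i t)))) 0)"

text \<open>Complex normal coordinates phi(xi, w; x0) given unit normal nv and frame e.\<close>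
definition phic :: "real^'n \<Rightarrow> real^'n \<Rightarrow> ('m \<Rightarrow> real^'n) \<Rightarrow> complex \<Rightarrow> complex^'m \<Rightarrow> complex^'n" where
  "phic x0 nv e xi w = cvec x0 + cscale xi (cvec nv) + (\<Sum>j\<in>UNIV. cscale (w $ j) (cvec (e j)))"

end

theory Submission
  imports Defs "HOL-Complex_Analysis.Cauchy_Integral_Formula"
begin

lemma supn_lt_iff: "supn z < r \<longleftrightarrow> (\<forall>i. norm (z $ i) < r)"
  unfolding supn_def by (subst Max_less_iff) auto

lemma supn_le_iff: "supn z \<le> r \<longleftrightarrow> (\<forall>i. norm (z $ i) \<le> r)"
  unfolding supn_def by (subst Max_le_iff) auto

lemma norm_le_supn: "norm (z $ i) \<le> supn z"
  using supn_le_iff by blast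

lemma supn_nonneg: "0 \<le> supn z"
  using norm_le_supn[of z] norm_ge_zero order_trans by blast

lemma cscale_nth[simp]: "cscale a v $ i = a * v $ i"
  by (simp add: cscale_def)
lemma cvec_nth[simp]: "cvec x $ i = complex_of_real (x $ i)"
  by (simp add: cvec_def)

lemma supn_add: "supn (a + b) \<le> supn a + supn b"
  unfolding supn_le_iff
proof
  fix i
  have "norm ((a + b) $ i) \<le> norm (a $ i) + norm (b $ i)" by (simp add: norm_triangle_ineq)
  also have "\<dots> \<le> supn a + supn b" by (intro add_mono norm_le_supn)
  finally show "norm ((a + b) $ i) \<le> supn a + supn b" .
qed

lemma supn_cscale: "supn (cscale a v) \<le> norm a * supn v"
  unfolding supn_le_iff by (simp add: norm_mult mult_left_mono norm_le_supn)

lemma supn_sum: "supn (\<Sum>j\<in>A. G j) \<le> (\<Sum>j\<in>A. supn (G j))"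
proof (induction A rule: infinite_finite_induct)
  case (infinite A) then show ?case by (simp add: supn_def)
next
  case empty then show ?case by (simp add: supn_def)
next
  case (insert x F) then show ?case using supn_add[of "G x" "sum G F"] by simp
qed

lemma supn_cvec: "supn (cvec x) \<le> norm x"
  unfolding supn_le_iff by (simp add: component_le_norm_cart)

lemma supn_minus: "supn (- a) = supn a"
  unfolding supn_def by simp

lemma supn_diff_commute: "supn (a - b) = supn (b - a)"
  by (metis minus_diff_eq supn_minus)

lemma cscale_eq_smult: "cscale a v = a *s v"
  by (simp add: vec_eq_iff)

lemma cscale_add_left: "cscale (a + b) v = cscale a v + cscale b v"
  by (simp add: vec_eq_iff algebra_simps)
lemma cscale_add_right: "cscale a (v + w) = cscale a v + cscale a w"
  by (simp add: vec_eq_iff algebra_simps)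
lemma cscale_mult: "cscale a (cscale b v) = cscale (a * b) v"
  by (simp add: vec_eq_iff algebra_simps)
lemma scaleR_cscale: "r *\<^sub>R h = cscale (of_real r) h"
  by (simp add: vec_eq_iff) (simp add: scaleR_conv_of_real)
lemma cscale_scaleR_left: "cscale (r *\<^sub>R a) v = r *\<^sub>R cscale a v"
  by (simp add: scaleR_cscale cscale_mult scaleR_conv_of_real)
lemma cscale_scaleR_right: "cscale a (r *\<^sub>R v) = r *\<^sub>R cscale a v"
  by (simp add: scaleR_cscale cscale_mult mult.commute)
lemma cscale_zero_left[simp]: "cscale 0 v = 0"
  by (simp add: vec_eq_iff)
lemma cscale_zero_right[simp]: "cscale a 0 = 0"
  by (simp add: vec_eq_iff)
lemma cscale_one[simp]: "cscale 1 v = v"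
  by (simp add: vec_eq_iff)

lemma bounded_linear_cscale_left: "bounded_linear (\<lambda>t. cscale t v)"
proof -
  have "linear (\<lambda>t. cscale t v)"
    by (intro linearI) (simp_all add: cscale_add_left cscale_scaleR_left)
  then show ?thesis by (simp add: linear_conv_bounded_linear)
qed

lemma bounded_linear_cscale_right: "bounded_linear (\<lambda>v. cscale a (v::complex^'n))"
proof -
  have "linear (\<lambda>v. cscale a (v::complex^'n))"
    by (intro linearI) (simp_all add: cscale_add_right cscale_scaleR_right)
  then show ?thesis by (simp add: linear_conv_bounded_linear)
qed

lemma axis_cscale: "axis j t = cscale t (axis j 1)"
  by (simp add: vec_eq_iff axis_def)

lemma cscale_decomp: "cscale a h = Re a *\<^sub>R h + Im a *\<^sub>R cscale \<i> h"
proof -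
  have "a = complex_of_real (Re a) + complex_of_real (Im a) * \<i>" by (simp add: complex_eq_iff)
  then show ?thesis by (simp add: scaleR_cscale cscale_mult cscale_add_left[symmetric])
qed

lemma complex_linear:
  assumes "linear D" "\<And>h. D (cscale \<i> h) = \<i> * D h"
  shows "D (cscale a h) = a * (D h :: complex)"
proof -
  have "D (cscale a h) = Re a *\<^sub>R D h + Im a *\<^sub>R D (cscale \<i> h)"
    using assms(1) by (subst cscale_decomp) (simp add: linear_add linear_scale)
  also have "\<dots> = a * D h" using assms(2)
    by (simp add: scaleR_conv_of_real complex_eq_iff)
  finally show ?thesis .
qed

definition dfc :: "(complex^'n \<Rightarrow> complex) \<Rightarrow> complex^'n \<Rightarrow> complex^'n \<Rightarrow> complex" where
  "dfc f z h = (\<Sum>j\<in>UNIV. h $ j * cpd j f z)"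

lemma vec_cscale_axis_sum: "h = (\<Sum>j\<in>UNIV. cscale (h $ j) (axis j 1))"
  by (simp add: vec_eq_iff axis_def sum_component if_distrib cong: if_cong)

lemma line_has_derivative_D:
  assumes "(f has_derivative D) (at (y + cscale t0 v))" "linear D" "\<And>h. D (cscale \<i> h) = \<i> * D h"
  shows "((\<lambda>t. f (y + cscale t v)) has_field_derivative D v) (at t0)"
proof -
  have l: "((\<lambda>t. y + cscale t v) has_derivative (\<lambda>t. cscale t v)) (at t0)"
    using has_derivative_add[OF has_derivative_const bounded_linear_imp_has_derivative[OF bounded_linear_cscale_left[of v]], of y]
    by simp
  have "((\<lambda>t. f (y + cscale t v)) has_derivative (\<lambda>t. D (cscale t v))) (at t0)"
    using diff_chain_at[OF l assms(1)] by (simp add: o_def)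
  moreover have "(\<lambda>t. D (cscale t v)) = (\<lambda>t. t * D v)"
    using complex_linear[OF assms(2,3)] by auto
  moreover have "(\<lambda>t. t * D v) = (*) (D v)" by (auto simp: fun_eq_iff mult.commute)
  ultimately show ?thesis
    by (simp add: has_field_derivative_def)
qed

lemma cdiff_onD:
  assumes "cdiff_on f (cscale \<i>) S" "z \<in> S"
  obtains D where "(f has_derivative D) (at z)" "linear D" "\<And>h. D (cscale \<i> h) = \<i> * D h"
proof -
  from assms obtain D where "(f has_derivative D) (at z)" "\<forall>h. D (cscale \<i> h) = \<i> * D h"
    unfolding cdiff_on_def by blast
  then show ?thesis using that has_derivative_linear by blast
qed

lemma cpd_eq_D:
  assumes "(f has_derivative D) (at z)" "linear D" "\<And>h. D (cscale \<i> h) = \<i> * D h"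
  shows "cpd j f z = D (axis j 1)"
proof -
  have "((\<lambda>t. f (z + cscale t (axis j 1))) has_field_derivative D (axis j 1)) (at 0)"
    by (rule line_has_derivative_D) (use assms in auto)
  moreover have "(\<lambda>t. f (z + cscale t (axis j 1))) = (\<lambda>t. f (z + axis j t))"
    by (simp add: axis_cscale[symmetric])
  ultimately show ?thesis unfolding cpd_def by (metis DERIV_imp_deriv)
qed

lemma D_eq_dfc:
  assumes "(f has_derivative D) (at z)" "linear D" "\<And>h. D (cscale \<i> h) = \<i> * D h"
  shows "D h = dfc f z h"
proof -
  have "D h = D (\<Sum>j\<in>UNIV. cscale (h $ j) (axis j 1))"
    by (rule arg_cong[OF vec_cscale_axis_sum])
  also have "\<dots> = (\<Sum>j\<in>UNIV. D (cscale (h $ j) (axis j 1)))"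
    using assms(2) by (simp add: linear_sum)
  also have "\<dots> = (\<Sum>j\<in>UNIV. h $ j * cpd j f z)"
    using complex_linear[OF assms(2,3)] cpd_eq_D[OF assms] by simp
  finally show ?thesis by (simp add: dfc_def)
qed

lemma cdiff_has_derivative:
  assumes "cdiff_on f (cscale \<i>) S" "z \<in> S"
  shows "(f has_derivative dfc f z) (at z)"
proof -
  obtain D where D: "(f has_derivative D) (at z)" "linear D" "\<And>h. D (cscale \<i> h) = \<i> * D h"
    using cdiff_onD[OF assms] by blast
  have "D = dfc f z" using D_eq_dfc[OF D] by (intro ext) auto
  then show ?thesis using D by simp
qed

lemma dfc_cscale: "dfc f z (cscale a h) = a * dfc f z h"
  by (simp add: dfc_def sum_distrib_left algebra_simps)
lemma dfc_add: "dfc f z (h + k) = dfc f z h + dfc f z k"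
  by (simp add: dfc_def sum.distrib algebra_simps)
lemma dfc_sum: "dfc f z (\<Sum>j\<in>A. H j) = (\<Sum>j\<in>A. dfc f z (H j))"
  by (induction A rule: infinite_finite_induct) (simp_all add: dfc_add, simp_all add: dfc_def)
lemma linear_dfc: "linear (dfc f z)"
  by (intro linearI) (simp_all add: dfc_add scaleR_cscale dfc_cscale scaleR_conv_of_real)

lemma line_deriv:
  assumes "cdiff_on f (cscale \<i>) S" "y + cscale t0 v \<in> S"
  shows "((\<lambda>t. f (y + cscale t v)) has_field_derivative dfc f (y + cscale t0 v) v) (at t0)"
  by (rule line_has_derivative_D[OF cdiff_has_derivative[OF assms] linear_dfc]) (simp add: dfc_cscale)

lemma norm_axis_vec: "norm (axis i (t::'a::real_normed_vector) :: 'a^'n) = norm t"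
proof -
  have "(\<Sum>k\<in>UNIV. (norm (axis i t $ k))\<^sup>2) = (\<Sum>k\<in>UNIV. if k = i then (norm t)\<^sup>2 else 0)"
    by (rule sum.cong) (auto simp: axis_def)
  then have "(\<Sum>k\<in>UNIV. (norm (axis i t $ k))\<^sup>2) = (norm t)\<^sup>2" by simp
  then show ?thesis unfolding norm_vec_def L2_set_def by simp
qed
lemma axis_add: "axis i (a + b) = axis i a + axis i (b::complex)"
  unfolding axis_def vec_eq_iff by auto

lemma norm_tri_aux: "norm (x::'a::real_normed_vector) \<le> norm u + norm (u - x)"
  using norm_triangle_ineq4[of u "u - x"] by simp

lemma taylor2_bound:
  fixes h :: "complex \<Rightarrow> complex"
  assumes hol: "h holomorphic_on ball 0 R" and dR: "0 < \<delta>" "\<delta> < R"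
    and B: "\<And>u. norm u \<le> \<delta> \<Longrightarrow> norm (h u) \<le> B"
    and t: "norm t \<le> \<delta> / 2"
  shows "norm (h t - h 0 - t * deriv h 0) \<le> 8 * B / \<delta>^2 * (norm t)^2"
proof -
  define L where "L = 8 * B / \<delta>^2"
  have opn: "open (ball (0::complex) R)" by simp
  have hd: "(h has_field_derivative deriv h u) (at u)" if "norm u < R" for u
    using hol that by (meson DERIV_deriv_iff_field_differentiable holomorphic_on_imp_differentiable_at opn mem_ball_0)
  have dhol: "deriv h holomorphic_on ball 0 R" by (rule holomorphic_deriv[OF hol opn])
  have dd: "(deriv h has_field_derivative deriv (deriv h) u) (at u)" if "norm u < R" for u
    using dhol that by (meson DERIV_deriv_iff_field_differentiable holomorphic_on_imp_differentiable_at opn mem_ball_0)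
  have ddb: "norm (deriv (deriv h) u) \<le> L" if "norm u \<le> \<delta>/2" for u
  proof -
    have csub: "cball u (\<delta>/2) \<subseteq> ball 0 R"
    proof
      fix x assume "x \<in> cball u (\<delta>/2)"
      then have "norm (u - x) \<le> \<delta>/2" by (simp add: dist_norm)
      then show "x \<in> ball 0 R" using norm_tri_aux[of x u] that dR by simp
    qed
    have sub: "ball u (\<delta>/2) \<subseteq> ball 0 R" using csub by auto
    have "norm ((deriv ^^ 2) h u) \<le> fact 2 * B / (\<delta>/2)^2"
    proof (rule Cauchy_inequality)
      show "h holomorphic_on ball u (\<delta> / 2)" using hol sub holomorphic_on_subset by blast
      show "continuous_on (cball u (\<delta> / 2)) h"
        using holomorphic_on_imp_continuous_on[OF hol] csub continuous_on_subset by blast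
      show "0 < \<delta>/2" using dR by simp
      fix x assume "norm (u - x) = \<delta>/2"
      then have "norm x \<le> \<delta>" using that norm_tri_aux[of x u] by simp
      then show "norm (h x) \<le> B" by (rule B)
    qed
    moreover have "(deriv ^^ 2) h u = deriv (deriv h) u" by (simp add: numeral_2_eq_2)
    ultimately show ?thesis by (simp add: L_def power_divide)
  qed
  have dlip: "norm (deriv h u - deriv h 0) \<le> L * norm u" if "norm u \<le> \<delta>/2" for u
  proof -
    have "norm (deriv h u - deriv h 0) \<le> L * norm (u - 0)"
    proof (rule field_differentiable_bound[where S = "cball 0 (\<delta>/2)" and f' = "deriv (deriv h)"])
      show "convex (cball (0::complex) (\<delta>/2))" by simp
      fix z :: complex assume "z \<in> cball 0 (\<delta>/2)"
      then have "norm z \<le> \<delta>/2" by simp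
      then show "(deriv h has_field_derivative deriv (deriv h) z) (at z within cball 0 (\<delta> / 2))"
        using dd[of z] dR by (auto intro: has_field_derivative_at_within)
      show "norm (deriv (deriv h) z) \<le> L" using ddb \<open>norm z \<le> \<delta>/2\<close> by blast
    qed (use that dR in auto)
    then show ?thesis by simp
  qed
  define g where "g u = h u - u * deriv h 0" for u
  have "norm (g t - g 0) \<le> (L * norm t) * norm (t - 0)"
  proof (rule field_differentiable_bound[where S = "closed_segment 0 t" and f' = "\<lambda>u. deriv h u - deriv h 0"])
    show "convex (closed_segment 0 t)" by simp
    fix z assume z: "z \<in> closed_segment 0 t"
    then obtain u where u: "0 \<le> u" "u \<le> 1" "z = u *\<^sub>R t"
      unfolding closed_segment_def by auto
    then have nz: "norm z \<le> norm t"
      using mult_left_le_one_le[of "norm t" u] by simp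
    then have "norm z < R" using t dR by linarith
    then show "(g has_field_derivative deriv h z - deriv h 0) (at z within closed_segment 0 t)"
    proof -
      have "(g has_field_derivative deriv h z - 1 * deriv h 0) (at z)"
        unfolding g_def by (rule DERIV_diff[OF hd[OF \<open>norm z < R\<close>] DERIV_cmult_right[OF DERIV_ident]])
      then show ?thesis by (simp add: has_field_derivative_at_within)
    qed
    show "norm (deriv h z - deriv h 0) \<le> L * norm t"
    proof -
      have "norm (deriv (deriv h) 0) \<le> L" using ddb dR by simp
      then have "0 \<le> L" using norm_ge_zero order_trans by blast
      have "L * norm z \<le> L * norm t" using nz \<open>0 \<le> L\<close> by (rule mult_left_mono)
      then show ?thesis using dlip[of z] nz t by simp
    qed
  qed auto
  moreover have "g t - g 0 = h t - h 0 - t * deriv h 0" by (simp add: g_def)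
  moreover have "(L * norm t) * norm (t - 0) = 8 * B / \<delta>^2 * (norm t)^2"
    by (simp add: L_def power2_eq_square)
  ultimately show ?thesis by simp
qed

lemma cdiff_cont:
  assumes "cdiff_on f (cscale \<i>) S"
  shows "continuous_on S (f :: complex^'n \<Rightarrow> complex)"
proof (rule continuous_at_imp_continuous_on, intro ballI)
  fix x assume "x \<in> S"
  then show "isCont f x" using has_derivative_continuous[OF cdiff_has_derivative[OF assms]] by blast
qed

lemma norm_axis_add_le: "norm (axis i s + axis j t :: complex^'n) \<le> norm s + norm t"
  using norm_triangle_ineq[of "axis i s :: complex^'n" "axis j t"] by (simp add: norm_axis_vec)

lemma dist_z_aux: "dist z (z + a + b) = norm (a + (b::'a::real_normed_vector))"
proof -
  have "dist z (z + a + b) = norm ((z + a + b) - z)" by (rule dist_commute[THEN trans], rule dist_norm)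
  also have "(z + a + b) - z = a + b" by simp
  finally show ?thesis .
qed

lemma mixed_holo:
  fixes f :: "complex^'n \<Rightarrow> complex"
  assumes cd: "cdiff_on f (cscale \<i>) S" and z: "z \<in> S"
  shows "(\<lambda>s. cpd j f (z + axis i s)) field_differentiable (at 0)"
proof -
  have "open S" using cd by (simp add: cdiff_on_def)
  then obtain e where e: "e > 0" "ball z e \<subseteq> S" using z open_contains_ball by blast
  define \<delta> where "\<delta> = e/3"
  have \<delta>: "\<delta> > 0" using e by (simp add: \<delta>_def)
  have inS: "z + axis i s + axis j t \<in> S" if "norm s + norm t < 3*\<delta>" for s t
  proof -
    have "dist z (z + axis i s + axis j t) < e"
      using norm_axis_add_le[of i s j t] that by (simp add: dist_z_aux \<delta>_def)
    then show ?thesis using e by auto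
  qed
  have cb: "cball z (2*\<delta>) \<subseteq> S" using e \<delta> by (auto simp: \<delta>_def)
  have "compact (f ` cball z (2*\<delta>))"
    by (rule compact_continuous_image[OF continuous_on_subset[OF cdiff_cont[OF cd] cb] compact_cball])
  then obtain B where B0: "B > 0" and B1: "\<forall>x\<in>f ` cball z (2*\<delta>). norm x \<le> B"
    using compact_imp_bounded bounded_pos by metis
  have Bb: "norm (f (z + axis i s + axis j t)) \<le> B" if "norm s + norm t \<le> 2*\<delta>" for s t
  proof -
    have "dist z (z + axis i s + axis j t) \<le> 2*\<delta>"
      using norm_axis_add_le[of i s j t] that by (simp add: dist_z_aux)
    then show ?thesis using B1 by auto
  qed
  define G where "G s t = f (z + axis i s + axis j t)" for s t
  have holt: "G s holomorphic_on ball 0 (2*\<delta>)" if "norm s \<le> \<delta>" for s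
    unfolding holomorphic_on_def
  proof
    fix t0 :: complex assume "t0 \<in> ball 0 (2*\<delta>)"
    then have "norm s + norm t0 < 3*\<delta>" using that by simp
    then have "(z + axis i s) + cscale t0 (axis j 1) \<in> S" using inS by (simp add: axis_cscale[symmetric])
    from line_deriv[OF cd this]
    have "(\<lambda>t. f ((z + axis i s) + cscale t (axis j 1))) field_differentiable (at t0)"
      unfolding field_differentiable_def by blast
    moreover have "(\<lambda>t. f ((z + axis i s) + cscale t (axis j 1))) = G s"
      by (simp add: G_def fun_eq_iff axis_cscale[symmetric])
    ultimately show "G s field_differentiable at t0 within ball 0 (2 * \<delta>)"
      by (metis field_differentiable_at_within)
  qed
  have hols: "(\<lambda>s. G s t) holomorphic_on ball 0 (2*\<delta>)" if "norm t \<le> \<delta>" for t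
    unfolding holomorphic_on_def
  proof
    fix s0 :: complex assume "s0 \<in> ball 0 (2*\<delta>)"
    then have "norm s0 + norm t < 3*\<delta>" using that by simp
    then have "(z + axis j t) + cscale s0 (axis i 1) \<in> S" using inS
      by (simp add: axis_cscale[symmetric] add_ac)
    from line_deriv[OF cd this]
    have "(\<lambda>s. f ((z + axis j t) + cscale s (axis i 1))) field_differentiable (at s0)"
      unfolding field_differentiable_def by blast
    moreover have "(\<lambda>s. f ((z + axis j t) + cscale s (axis i 1))) = (\<lambda>s. G s t)"
      by (simp add: G_def fun_eq_iff axis_cscale[symmetric] add_ac)
    ultimately show "(\<lambda>s. G s t) field_differentiable at s0 within ball 0 (2 * \<delta>)"
      by (metis field_differentiable_at_within)
  qed
  define K where "K s = cpd j f (z + axis i s)" for s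
  have KG: "K s = deriv (G s) 0" for s
  proof -
    have "G s = (\<lambda>t. f (z + axis i s + axis j t))" by (simp add: G_def fun_eq_iff)
    then show ?thesis by (simp add: K_def cpd_def)
  qed
  have tay: "norm (G s t - G s 0 - t * K s) \<le> 8 * B / \<delta>^2 * (norm t)^2"
    if "norm s \<le> \<delta>" "norm t \<le> \<delta>/2" for s t
    unfolding KG
  proof (rule taylor2_bound[OF holt[OF that(1)]])
    show "0 < \<delta>" "\<delta> < 2*\<delta>" using \<delta> by auto
    show "norm t \<le> \<delta>/2" by fact
    fix u :: complex assume "norm u \<le> \<delta>"
    then show "norm (G s u) \<le> B" unfolding G_def using that by (intro Bb) simp
  qed
  define Q where "Q t s = (G s t - G s 0) / t" for t s
  have ul: "uniform_limit (cball 0 \<delta>) Q K (at 0)"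
    unfolding uniform_limit_iff
  proof (intro allI impI)
    fix \<epsilon> :: real assume "\<epsilon> > 0"
    define \<eta> where "\<eta> = min (\<delta>/2) (\<epsilon> * \<delta>^2 / (8*B))"
    have \<eta>: "\<eta> > 0" using \<delta> B0 \<open>\<epsilon> > 0\<close> by (simp add: \<eta>_def)
    show "\<forall>\<^sub>F t in at 0. \<forall>s\<in>cball 0 \<delta>. dist (Q t s) (K s) < \<epsilon>"
      unfolding eventually_at
    proof (intro exI[of _ \<eta>] conjI \<eta> ballI impI)
      fix t :: complex and s :: complex
      assume t: "t \<noteq> 0 \<and> dist t 0 < \<eta>" and s: "s \<in> cball 0 \<delta>"
      have nt: "norm t < \<eta>" "norm t > 0" using t by auto
      have "Q t s - K s = (G s t - G s 0 - t * K s) / t"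
        using nt by (simp add: Q_def field_simps)
      then have "dist (Q t s) (K s) = norm (G s t - G s 0 - t * K s) / norm t"
        by (simp add: dist_norm norm_divide)
      also have "\<dots> \<le> 8 * B / \<delta>^2 * (norm t)^2 / norm t"
        using tay[of s t] s nt \<eta>_def by (intro divide_right_mono) auto
      also have "\<dots> = 8 * B / \<delta>^2 * norm t"
        using nt by (simp add: power2_eq_square)
      also have "\<dots> < 8 * B / \<delta>^2 * (\<epsilon> * \<delta>^2 / (8*B))"
        using nt \<eta>_def B0 \<delta> by (intro mult_strict_left_mono) auto
      also have "\<dots> = \<epsilon>" using B0 \<delta> by (simp add: field_simps)
      finally show "dist (Q t s) (K s) < \<epsilon>" .
    qed
  qed
  have ev: "\<forall>\<^sub>F t in at 0. continuous_on (cball 0 \<delta>) (Q t) \<and> Q t holomorphic_on ball 0 \<delta>"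
    unfolding eventually_at
  proof (intro exI[of _ \<delta>] conjI \<delta> ballI impI)
    fix t :: complex assume t: "t \<noteq> 0 \<and> dist t 0 < \<delta>"
    have "Q t holomorphic_on ball 0 (2*\<delta>)"
      unfolding Q_def using t \<delta>
      by (intro holomorphic_intros hols) auto
    moreover have "cball 0 \<delta> \<subseteq> ball (0::complex) (2*\<delta>)" "ball 0 \<delta> \<subseteq> ball (0::complex) (2*\<delta>)"
      using \<delta> by auto
    ultimately show "continuous_on (cball 0 \<delta>) (Q t)" "Q t holomorphic_on ball 0 \<delta>"
      by (meson holomorphic_on_imp_continuous_on continuous_on_subset holomorphic_on_subset)+
  qed
  obtain "K holomorphic_on ball 0 \<delta>"
    using holomorphic_uniform_limit[OF ev ul trivial_limit_at] by blast
  then have "K field_differentiable (at 0)"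
    using \<delta> by (intro holomorphic_on_imp_differentiable_at) auto
  moreover have "K = (\<lambda>s. cpd j f (z + axis i s))" by (simp add: K_def fun_eq_iff)
  ultimately show ?thesis by simp
qed

lemma axis_zero[simp]: "axis i 0 = 0"
  by (simp add: vec_eq_iff axis_def)

lemma cpd_line_deriv:
  fixes f :: "complex^'n \<Rightarrow> complex"
  assumes cd: "cdiff_on f (cscale \<i>) S" and y: "y + axis i s0 \<in> S"
  shows "((\<lambda>s. cpd j f (y + axis i s)) has_field_derivative cpd i (cpd j f) (y + axis i s0)) (at s0)"
proof -
  define z where "z = y + axis i s0"
  have "(\<lambda>u. cpd j f (z + axis i u)) field_differentiable (at 0)"
    using mixed_holo[OF cd] y z_def by blast
  then have d0: "((\<lambda>u. cpd j f (z + axis i u)) has_field_derivative cpd i (cpd j f) z) (at (s0 + - s0))"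
    unfolding cpd_def by (simp add: DERIV_deriv_iff_field_differentiable[symmetric])
  have "((\<lambda>s. cpd j f (z + axis i (s + - s0))) has_field_derivative cpd i (cpd j f) z) (at s0)"
    using DERIV_shift[THEN iffD1, OF d0] .
  moreover have "(\<lambda>s. cpd j f (z + axis i (s + - s0))) = (\<lambda>s. cpd j f (y + axis i s))"
  proof
    fix s
    have "z + axis i (s + - s0) = y + axis i s"
      unfolding z_def by (simp add: vec_eq_iff axis_def)
    then show "cpd j f (z + axis i (s + - s0)) = cpd j f (y + axis i s)" by simp
  qed
  ultimately show ?thesis by (simp add: z_def)
qed

lemma axis_path:
  fixes F :: "'a::real_normed_vector^'n \<Rightarrow> 'b::real_normed_vector"
  assumes step: "\<And>y i t. (\<forall>k. y$k \<in> U k) \<Longrightarrow> y$i + t \<in> U i \<Longrightarrow> norm (F (y + axis i t) - F y) \<le> L * norm t"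
    and c: "\<forall>k. c$k \<in> U k" and z: "\<forall>k. z$k \<in> U k"
  shows "norm (F z - F c) \<le> L * (\<Sum>k\<in>UNIV. norm (z$k - c$k))"
proof -
  define zA where "zA A = (\<chi> k. if k \<in> A then z$k else c$k)" for A
  have zAU: "\<forall>k. zA A $ k \<in> U k" for A using c z by (simp add: zA_def)
  have main: "norm (F (zA A) - F c) \<le> L * (\<Sum>k\<in>A. norm (z$k - c$k))" if "finite A" for A
    using that
  proof (induction A rule: finite_induct)
    case empty
    have "zA {} = c" by (simp add: zA_def vec_eq_iff)
    then show ?case by simp
  next
    case (insert a A)
    have e: "zA (insert a A) = zA A + axis a (z$a - c$a)"
      using insert(2) by (auto simp: zA_def vec_eq_iff axis_def)
    have "zA A $ a + (z$a - c$a) = z$a" using insert(2) by (simp add: zA_def)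
    then have st: "norm (F (zA (insert a A)) - F (zA A)) \<le> L * norm (z$a - c$a)"
      unfolding e by (intro step zAU) (simp add: z)
    have "norm (F (zA (insert a A)) - F c) \<le> norm (F (zA (insert a A)) - F (zA A)) + norm (F (zA A) - F c)"
      using norm_triangle_ineq[of "F (zA (insert a A)) - F (zA A)" "F (zA A) - F c"] by simp
    also have "\<dots> \<le> L * norm (z$a - c$a) + L * (\<Sum>k\<in>A. norm (z$k - c$k))"
      using st insert(3) by (rule add_mono)
    also have "\<dots> = L * (\<Sum>k\<in>insert a A. norm (z$k - c$k))"
      using insert(1,2) by (simp add: distrib_left)
    finally show ?case .
  qed
  have "zA UNIV = z" by (simp add: zA_def vec_eq_iff)
  then show ?thesis using main[of UNIV] by simp
qed

lemma dfc_axis: "dfc f z (axis i 1) = cpd i f z"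
proof -
  have "dfc f z (axis i 1) = (\<Sum>j\<in>UNIV. if j = i then cpd i f z else 0)"
    unfolding dfc_def by (rule sum.cong) (auto simp: axis_def)
  then show ?thesis by simp
qed

lemma segment_in_ball:
  fixes a :: complex
  assumes "a \<in> ball c r" "a + t \<in> ball c r" "s \<in> closed_segment 0 t"
  shows "a + s \<in> ball c (r::real)"
proof -
  have "a + s \<in> closed_segment a (a + t)"
    using assms(3) unfolding closed_segment_def by (auto simp: algebra_simps)
  moreover have "closed_segment a (a + t) \<subseteq> ball c r"
    using assms(1,2) by (rule closed_segment_subset[OF _ _ convex_ball])
  ultimately show ?thesis by blast
qed

lemma segment_in_cball:
  fixes a :: complex
  assumes "a \<in> cball c r" "a + t \<in> cball c r" "s \<in> closed_segment 0 t"
  shows "a + s \<in> cball c (r::real)"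
proof -
  have "a + s \<in> closed_segment a (a + t)"
    using assms(3) unfolding closed_segment_def by (auto simp: algebra_simps)
  moreover have "closed_segment a (a + t) \<subseteq> cball c r"
    using assms(1,2) by (rule closed_segment_subset[OF _ _ convex_cball])
  ultimately show ?thesis by blast
qed

lemma polydisc_iff: "supn (w - c) < \<rho> \<longleftrightarrow> (\<forall>k. w$k \<in> ball (c$k) \<rho>)"
  unfolding supn_lt_iff by (simp add: dist_norm norm_minus_commute)

lemma cpd_lip:
  fixes f :: "complex^'n \<Rightarrow> complex"
  assumes cd: "cdiff_on f (cscale \<i>) {w. supn (w - c) < \<rho>}"
    and M: "\<And>w i j. supn (w - c) < \<rho> \<Longrightarrow> norm (cpd i (cpd j f) w) \<le> M"
    and \<rho>: "0 < \<rho>" and y: "supn (y - c) < \<rho>"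
  shows "norm (cpd j f y - cpd j f c) \<le> M * (\<Sum>k\<in>UNIV. norm (y$k - c$k))"
proof (rule axis_path[where U = "\<lambda>k. ball (c$k) \<rho>"])
  show "\<forall>k. c $ k \<in> ball (c $ k) \<rho>" using \<rho> by simp
  show "\<forall>k. y $ k \<in> ball (c $ k) \<rho>" using y polydisc_iff by blast
  fix x i t assume x: "\<forall>k. x $ k \<in> ball (c $ k) \<rho>" and xt: "x $ i + t \<in> ball (c $ i) \<rho>"
  have inP: "supn (x + axis i s - c) < \<rho>" if "s \<in> closed_segment 0 t" for s
    unfolding polydisc_iff
  proof
    fix k show "(x + axis i s) $ k \<in> ball (c $ k) \<rho>"
      using x segment_in_ball[OF _ xt that] by (cases "k = i") (auto simp: axis_def)
  qed
  have "norm (cpd j f (x + axis i t) - cpd j f (x + axis i 0)) \<le> M * norm (t - 0)"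
  proof (rule field_differentiable_bound[where S = "closed_segment 0 t"])
    fix s assume s: "s \<in> closed_segment 0 t"
    show "((\<lambda>s. cpd j f (x + axis i s)) has_field_derivative cpd i (cpd j f) (x + axis i s)) (at s within closed_segment 0 t)"
      using cpd_line_deriv[OF cd, of x i s] inP[OF s] by (auto intro: has_field_derivative_at_within)
    show "norm (cpd i (cpd j f) (x + axis i s)) \<le> M" using M inP[OF s] by blast
  qed auto
  then show "norm (cpd j f (x + axis i t) - cpd j f x) \<le> M * norm t" by simp
qed

lemma sum_le_card_bound:
  fixes g :: "'n::finite \<Rightarrow> real"
  assumes "\<And>k. g k \<le> R"
  shows "(\<Sum>k\<in>UNIV. g k) \<le> real CARD('n) * R"
  using sum_bounded_above[of UNIV g R] assms by simp

lemma dfc_zero[simp]: "dfc f z 0 = 0"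
  by (simp add: dfc_def)

lemma dfc_diff: "dfc f z (h - k) = dfc f z h - dfc f z k"
  by (simp add: dfc_def sum_subtractf algebra_simps)

lemma taylor_poly:
  fixes f :: "complex^'n \<Rightarrow> complex"
  assumes cd: "cdiff_on f (cscale \<i>) {w. supn (w - c) < \<rho>}"
    and M: "\<And>w i j. supn (w - c) < \<rho> \<Longrightarrow> norm (cpd i (cpd j f) w) \<le> M"
    and u: "supn u < \<rho>"
  shows "norm (f (c + u) - f c - dfc f c u) \<le> real CARD('n) ^ 2 * M * (supn u)^2"
proof -
  define R where "R = supn u"
  define N where "N = real CARD('n)"
  have R: "0 \<le> R" "R < \<rho>" using u supn_nonneg by (auto simp: R_def)
  have \<rho>: "0 < \<rho>" using R by simp
  have M0: "0 \<le> M" using M[of c] \<rho> by (simp add: supn_def) (meson norm_ge_zero order_trans)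
  define F where "F y = f y - dfc f c (y - c)" for y
  have inP: "supn (w - c) < \<rho>" if "\<forall>k. w$k \<in> cball (c$k) R" for w
  proof -
    have "supn (w - c) \<le> R" unfolding supn_le_iff using that by (simp add: dist_norm norm_minus_commute)
    then show ?thesis using R by simp
  qed
  have cpdb: "norm (cpd i f w - cpd i f c) \<le> M * (N * R)" if "\<forall>k. w$k \<in> cball (c$k) R" for w i
  proof -
    have "norm (cpd i f w - cpd i f c) \<le> M * (\<Sum>k\<in>UNIV. norm (w$k - c$k))"
      by (rule cpd_lip[OF cd M \<rho> inP[OF that]])
    also have "\<dots> \<le> M * (N * R)"
      using that unfolding N_def
      by (intro mult_left_mono M0 sum_le_card_bound) (simp add: dist_norm norm_minus_commute)
    finally show ?thesis .
  qed
  have "norm (F (c + u) - F c) \<le> (M * (N * R)) * (\<Sum>k\<in>UNIV. norm ((c + u)$k - c$k))"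
  proof (rule axis_path[where U = "\<lambda>k. cball (c$k) R"])
    show "\<forall>k. c $ k \<in> cball (c $ k) R" using R by simp
    show "\<forall>k. (c + u) $ k \<in> cball (c $ k) R" by (simp add: dist_norm R_def norm_le_supn)
    fix x i t assume x: "\<forall>k. x $ k \<in> cball (c $ k) R" and xt: "x $ i + t \<in> cball (c $ i) R"
    have inQ: "\<forall>k. (x + axis i s) $ k \<in> cball (c $ k) R" if "s \<in> closed_segment 0 t" for s
    proof
      fix k show "(x + axis i s) $ k \<in> cball (c $ k) R"
        using x segment_in_cball[OF _ xt that] by (cases "k = i") (auto simp: axis_def)
    qed
    have "norm (F (x + axis i t) - F (x + axis i 0)) \<le> (M * (N * R)) * norm (t - 0)"
    proof (rule field_differentiable_bound[where S = "closed_segment 0 t"])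
      fix s assume s: "s \<in> closed_segment 0 t"
      have P: "x + cscale s (axis i 1) \<in> {w. supn (w - c) < \<rho>}"
        using inP[OF inQ[OF s]] by (simp add: axis_cscale[symmetric])
      have d1: "((\<lambda>s. f (x + cscale s (axis i 1))) has_field_derivative cpd i f (x + axis i s)) (at s)"
        using line_deriv[OF cd P] by (simp add: dfc_axis axis_cscale[symmetric])
      have e: "(\<lambda>s. F (x + axis i s)) = (\<lambda>s. f (x + cscale s (axis i 1)) - (dfc f c (x - c) + s * cpd i f c))"
      proof
        fix s
        have eq: "x + axis i s - c = (x - c) + cscale s (axis i 1)" by (simp add: axis_cscale[symmetric] algebra_simps)
        have "dfc f c (x + axis i s - c) = dfc f c ((x - c) + cscale s (axis i 1))"
          by (simp only: eq)
        also have "\<dots> = dfc f c (x - c) + s * cpd i f c"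
          by (simp only: dfc_add dfc_cscale dfc_axis)
        finally have "dfc f c (x + axis i s - c) = dfc f c (x - c) + s * cpd i f c" .
        then show "F (x + axis i s) = f (x + cscale s (axis i 1)) - (dfc f c (x - c) + s * cpd i f c)"
          unfolding F_def by (simp add: axis_cscale[symmetric])
      qed
      have "((\<lambda>s. f (x + cscale s (axis i 1)) - (dfc f c (x - c) + s * cpd i f c)) has_field_derivative
              cpd i f (x + axis i s) - (0 + 1 * cpd i f c)) (at s)"
        by (rule DERIV_diff[OF d1 DERIV_add[OF DERIV_const DERIV_cmult_right[OF DERIV_ident]]])
      then show "((\<lambda>s. F (x + axis i s)) has_field_derivative cpd i f (x + axis i s) - cpd i f c) (at s within closed_segment 0 t)"
        unfolding e by (simp add: has_field_derivative_at_within)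
      show "norm (cpd i f (x + axis i s) - cpd i f c) \<le> M * (N * R)"
        by (rule cpdb[OF inQ[OF s]])
    qed auto
    then show "norm (F (x + axis i t) - F x) \<le> M * (N * R) * norm t" by simp
  qed
  also have "\<dots> \<le> (M * (N * R)) * (N * R)"
    unfolding N_def using M0 R
    by (intro mult_left_mono sum_le_card_bound) (auto simp: R_def norm_le_supn)
  also have "\<dots> = N^2 * M * R^2" by (simp add: power2_eq_square)
  finally have "norm (F (c + u) - F c) \<le> N^2 * M * R^2" .
  moreover have "F (c + u) - F c = f (c + u) - f c - dfc f c u" by (simp add: F_def)
  ultimately show ?thesis by (simp add: N_def R_def)
qed

lemma cvec_axis: "cvec (x0 + axis j r) = cvec x0 + cscale (of_real r) (axis j 1)"
  by (simp add: vec_eq_iff axis_def)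

lemma cpd_real_grad:
  fixes f :: "complex^'n \<Rightarrow> complex"
  assumes cd: "cdiff_on f (cscale \<i>) {z. supn (z - cvec x0) < \<rho>0}" and \<rho>0: "\<rho>0 > 0"
    and real: "\<forall>x. supn (cvec x - cvec x0) < \<rho>0 \<longrightarrow> f (cvec x) \<in> \<real>"
  shows "cpd j f (cvec x0) = complex_of_real (rgrad f x0 $ j)"
proof -
  define z0 where "z0 = cvec x0"
  define c where "c = cpd j f z0"
  have "z0 + cscale (of_real 0) (axis j 1) \<in> {z. supn (z - cvec x0) < \<rho>0}"
    using \<rho>0 by (simp add: z0_def supn_def)
  from line_deriv[OF cd this]
  have d: "((\<lambda>t. f (z0 + cscale t (axis j 1))) has_field_derivative c) (at (of_real 0))"
    by (simp add: dfc_axis c_def)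
  define F where "F r = f (z0 + cscale (of_real r) (axis j 1))" for r :: real
  have Fv: "(F has_vector_derivative c) (at 0)"
    unfolding F_def using has_vector_derivative_real_field[OF d, of UNIV] by simp
  have Fe: "F r = f (cvec (x0 + axis j r))" for r
    by (simp add: F_def z0_def cvec_axis)
  have re: "((\<lambda>r. Re (F r)) has_field_derivative Re c) (at 0)"
    by (rule has_field_derivative_Re[OF Fv])
  have im: "((\<lambda>r. Im (F r)) has_field_derivative Im c) (at 0)"
    by (rule has_field_derivative_Im[OF Fv])
  have im0: "Im (F r) = 0" if "r \<in> ball 0 \<rho>0" for r
  proof -
    have "supn (cvec (x0 + axis j r) - cvec x0) \<le> norm (axis j r :: real^'n)"
    proof -
      have "cvec (x0 + axis j r) - cvec x0 = cvec (axis j r)" by (simp add: vec_eq_iff)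
      then show ?thesis using supn_cvec by metis
    qed
    also have "\<dots> < \<rho>0" using that by (simp add: norm_axis_vec)
    finally have "f (cvec (x0 + axis j r)) \<in> \<real>" using real by blast
    then show ?thesis by (simp add: Fe complex_is_Real_iff)
  qed
  have "((\<lambda>r. 0) has_field_derivative Im c) (at (0::real))"
    by (rule has_field_derivative_transform_within_open[where S = "ball 0 \<rho>0", OF im _ _ im0]) (use \<rho>0 in auto)
  then have "Im c = 0" using DERIV_const DERIV_unique by blast
  moreover have "rgrad f x0 $ j = Re c"
  proof -
    have "(\<lambda>t. Re (f (cvec (x0 + axis j t)))) = (\<lambda>r. Re (F r))" by (simp add: Fe)
    then show ?thesis unfolding rgrad_def using DERIV_imp_deriv[OF re] by simp
  qed
  ultimately show ?thesis unfolding c_def z0_def by (simp add: complex_eq_iff)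
qed

lemma dfc_cvec_grad:
  assumes "\<And>j. cpd j f (cvec x0) = complex_of_real (rgrad f x0 $ j)"
  shows "dfc f (cvec x0) (cvec v) = complex_of_real (rgrad f x0 \<bullet> v)"
  unfolding dfc_def assms inner_vec_def by (simp add: mult.commute)

locale setting =
  fixes f :: "complex^'n \<Rightarrow> complex" and x0 :: "real^'n" and \<rho>0 \<rho>1 M2 \<mu> c :: real
    and nv :: "real^'n" and e :: "'m::finite \<Rightarrow> real^'n"
  assumes card: "CARD('n) = CARD('m) + 1"
  and cd: "cdiff_on f (cscale \<i>) {z. supn (z - cvec x0) < \<rho>0}"
  and \<rho>0: "\<rho>0 > 0"
  and real: "\<forall>x. supn (cvec x - cvec x0) < \<rho>0 \<longrightarrow> f (cvec x) \<in> \<real>"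
  and M2: "\<And>w i j. supn (w - cvec x0) < \<rho>0 \<Longrightarrow> norm (cpd i (cpd j f) w) \<le> M2"
  and \<mu>: "\<mu> = norm (rgrad f x0)" and \<mu>0: "\<mu> > 0"
  and nv: "nv = (1/\<mu>) *\<^sub>R rgrad f x0"
  and eo: "\<forall>i j. e i \<bullet> e j = (if i = j then 1 else 0)" and en: "\<forall>j. e j \<bullet> nv = 0"
  and \<rho>1: "\<rho>1 > 0" and \<rho>1c: "\<rho>1 \<le> c * \<rho>0" and \<rho>1M: "\<rho>1 * M2 \<le> c * \<mu>"
  and c: "c = 1/(8 * real CARD('n)^2)"
begin

definition "z0 = cvec x0"
definition "E0 = f z0"
definition "\<phi> = phic x0 nv e"
definition "r = c * \<rho>1"
definition "r' = c * \<rho>1 * min 1 \<mu>"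
definition "N = real CARD('n)"
definition "m = real CARD('m)"
definition "T w E \<xi> = \<xi> - (f (\<phi> \<xi> w) - E) / complex_of_real \<mu>"

lemma N2: "N \<ge> 2" and mN: "m + 1 = N" and m1: "m \<ge> 1"
proof -
  have "CARD('m) \<ge> 1" by (simp add: Suc_leI)
  then show "N \<ge> 2" "m + 1 = N" "m \<ge> 1" unfolding N_def m_def using card by auto
qed

lemma c_pos: "c > 0" and c_small: "c \<le> 1/32" and cN: "8 * N^2 * c = 1"
proof -
  have "N^2 \<ge> 2^2" using N2 by (intro power_mono) auto
  then have "N^2 \<ge> 4" by simp
  then have "32 \<le> 8 * N^2" by simp
  then have "1 / (8 * N^2) \<le> 1/32" using N2 by (intro divide_left_mono) auto
  moreover have "N \<noteq> 0" using N2 by simp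
  ultimately show "c > 0" "c \<le> 1/32" "8 * N^2 * c = 1" unfolding c N_def[symmetric] by (auto simp: field_simps)
qed

lemma M2_nonneg: "M2 \<ge> 0"
proof -
  have "norm (cpd undefined (cpd undefined f) (cvec x0)) \<le> M2" using M2 \<rho>0 by (simp add: supn_def)
  then show ?thesis using norm_ge_zero order_trans by blast
qed

lemma norm_nv: "norm nv = 1"
  using \<mu> \<mu>0 nv by simp

lemma norm_e: "norm (e j) = 1"
  using eo by (simp add: norm_eq_sqrt_inner)

lemma supn_nv: "supn (cvec nv) \<le> 1"
  using supn_cvec[of nv] norm_nv by simp

lemma supn_e: "supn (cvec (e j)) \<le> 1"
  using supn_cvec[of "e j"] norm_e by simp

lemma nv_comp: "\<bar>nv $ k\<bar> \<le> 1"
  using component_le_norm_cart[of nv k] norm_nv by simp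

lemma phi_sub: "\<phi> \<xi> w - z0 = cscale \<xi> (cvec nv) + (\<Sum>j\<in>UNIV. cscale (w$j) (cvec (e j)))"
  unfolding \<phi>_def phic_def z0_def by simp

lemma supn_u: "supn (\<Sum>j\<in>UNIV. cscale (w$j) (cvec (e j))) \<le> m * supn w"
proof -
  have "supn (\<Sum>j\<in>UNIV. cscale (w$j) (cvec (e j))) \<le> (\<Sum>j\<in>UNIV. supn (cscale (w$j) (cvec (e j))))"
    by (rule supn_sum)
  also have "\<dots> \<le> (\<Sum>j\<in>(UNIV::'m set). supn w)"
  proof (rule sum_mono)
    fix j
    have "supn (cscale (w$j) (cvec (e j))) \<le> norm (w$j) * supn (cvec (e j))" by (rule supn_cscale)
    also have "\<dots> \<le> supn w * 1"
      by (intro mult_mono norm_le_supn supn_e supn_nonneg)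
    finally show "supn (cscale (w$j) (cvec (e j))) \<le> supn w" by simp
  qed
  also have "\<dots> = m * supn w" by (simp add: m_def)
  finally show ?thesis .
qed

lemma supn_phi: "supn (\<phi> \<xi> w - z0) \<le> norm \<xi> + m * supn w"
proof -
  have "supn (\<phi> \<xi> w - z0) \<le> supn (cscale \<xi> (cvec nv)) + supn (\<Sum>j\<in>UNIV. cscale (w$j) (cvec (e j)))"
    unfolding phi_sub by (rule supn_add)
  also have "\<dots> \<le> norm \<xi> + m * supn w"
  proof (rule add_mono)
    have "supn (cscale \<xi> (cvec nv)) \<le> norm \<xi> * supn (cvec nv)" by (rule supn_cscale)
    also have "\<dots> \<le> norm \<xi> * 1" by (intro mult_left_mono supn_nv norm_ge_zero)
    finally show "supn (cscale \<xi> (cvec nv)) \<le> norm \<xi>" by simp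
  qed (rule supn_u)
  finally show ?thesis .
qed

lemma mc: "m * c \<le> 1"
proof -
  have "m * c \<le> N * c" using mN c_pos by (intro mult_right_mono) auto
  also have "N * c \<le> 8 * N^2 * c" using N2 c_pos by (intro mult_right_mono) (auto simp: power2_eq_square)
  finally show ?thesis using cN by simp
qed

lemma r_pos: "r > 0" using c_pos \<rho>1 by (simp add: r_def)
lemma r_lt: "r < \<rho>1" using c_small \<rho>1 by (simp add: r_def)

lemma phi_in: 
  assumes "norm \<xi> < \<rho>1" "supn w < r"
  shows "supn (\<phi> \<xi> w - z0) < 2 * \<rho>1" "2 * \<rho>1 < \<rho>0" "supn (\<phi> \<xi> w - z0) < \<rho>0"
proof -
  have "m * supn w \<le> m * r" using assms m1 by (intro mult_left_mono) auto
  also have "m * r \<le> \<rho>1"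
  proof -
    have "m * r = (m * c) * \<rho>1" by (simp add: r_def)
    also have "\<dots> \<le> 1 * \<rho>1" using mc \<rho>1 by (intro mult_right_mono) auto
    finally show ?thesis by simp
  qed
  finally have "norm \<xi> + m * supn w < 2 * \<rho>1" using assms by simp
  then show "supn (\<phi> \<xi> w - z0) < 2 * \<rho>1" using supn_phi[of \<xi> w] by simp
  moreover have a: "c * \<rho>0 \<le> (1/32) * \<rho>0" by (rule mult_right_mono[OF c_small]) (use \<rho>0 in simp)
  show "2 * \<rho>1 < \<rho>0" using \<rho>1c a \<rho>0 by linarith
  ultimately show "supn (\<phi> \<xi> w - z0) < \<rho>0" by simp
qed

end

context setting begin

lemma cpd_z0: "cpd j f z0 = complex_of_real (rgrad f x0 $ j)"
  unfolding z0_def by (rule cpd_real_grad[OF cd \<rho>0 real])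

lemma dfc_z0_cvec: "dfc f z0 (cvec v) = complex_of_real (rgrad f x0 \<bullet> v)"
  unfolding z0_def by (rule dfc_cvec_grad) (rule cpd_z0[unfolded z0_def])

lemma grad_nv: "rgrad f x0 = \<mu> *\<^sub>R nv"
  using nv \<mu>0 by simp

lemma dfc_z0_nv: "dfc f z0 (cvec nv) = complex_of_real \<mu>"
proof -
  have "rgrad f x0 \<bullet> nv = \<mu> * (nv \<bullet> nv)" by (simp add: grad_nv)
  also have "nv \<bullet> nv = 1" using norm_nv by (simp add: norm_eq_sqrt_inner)
  finally show ?thesis by (simp add: dfc_z0_cvec)
qed

lemma dfc_z0_e: "dfc f z0 (cvec (e j)) = 0"
proof -
  have "rgrad f x0 \<bullet> e j = \<mu> * (nv \<bullet> e j)" by (simp add: grad_nv)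
  also have "nv \<bullet> e j = 0" using en by (simp add: inner_commute)
  finally show ?thesis by (simp add: dfc_z0_cvec)
qed

lemma sum_comp_bound:
  assumes "supn (z - z0) \<le> R"
  shows "(\<Sum>k\<in>UNIV. norm (z$k - z0$k)) \<le> N * R"
  unfolding N_def
proof (rule sum_le_card_bound)
  fix k show "norm (z$k - z0$k) \<le> R" using norm_le_supn[of "z - z0" k] assms by simp
qed

lemma dbound:
  assumes "supn (z - z0) < 2 * \<rho>1"
  shows "norm (dfc f z (cvec nv) - \<mu>) \<le> \<mu>/4"
proof -
  have "2*\<rho>1 < \<rho>0" using phi_in(2)[of 0 0] r_pos \<rho>1 by (simp add: supn_def)
  then have zP: "supn (z - cvec x0) < \<rho>0" using assms by (simp add: z0_def)
  have each: "norm (cpd j f z - cpd j f z0) \<le> M2 * (N * (2 * \<rho>1))" for j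
  proof -
    have "norm (cpd j f z - cpd j f z0) \<le> M2 * (\<Sum>k\<in>UNIV. norm (z$k - z0$k))"
      unfolding z0_def by (rule cpd_lip[OF cd M2 \<rho>0 zP])
    also have "\<dots> \<le> M2 * (N * (2 * \<rho>1))"
      using sum_comp_bound[of z "2*\<rho>1"] assms M2_nonneg by (intro mult_left_mono) auto
    finally show ?thesis .
  qed
  have "dfc f z (cvec nv) - \<mu> = dfc f z (cvec nv) - dfc f z0 (cvec nv)" by (simp add: dfc_z0_nv)
  also have "\<dots> = (\<Sum>j\<in>UNIV. complex_of_real (nv$j) * (cpd j f z - cpd j f z0))"
    unfolding dfc_def by (simp add: sum_subtractf algebra_simps)
  finally have "norm (dfc f z (cvec nv) - \<mu>) \<le> (\<Sum>j\<in>UNIV. norm (complex_of_real (nv$j) * (cpd j f z - cpd j f z0)))"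
    by (simp add: norm_sum)
  also have "\<dots> \<le> (\<Sum>j\<in>(UNIV::'n set). 1 * (M2 * (N * (2 * \<rho>1))))"
  proof (rule sum_mono)
    fix j
    show "norm (complex_of_real (nv$j) * (cpd j f z - cpd j f z0)) \<le> 1 * (M2 * (N * (2 * \<rho>1)))"
      unfolding norm_mult using nv_comp[of j] each[of j] by (intro mult_mono) auto
  qed
  also have "\<dots> = 2 * N^2 * (\<rho>1 * M2)" by (simp add: N_def power2_eq_square)
  also have "\<dots> \<le> 2 * N^2 * (c * \<mu>)" using \<rho>1M by (intro mult_left_mono) auto
  also have "\<dots> = \<mu>/4" using cN by (simp add: field_simps)
  finally show ?thesis .
qed

lemma phi_shift: "\<phi> \<xi> w = \<phi> 0 w + cscale \<xi> (cvec nv)"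
  by (simp add: \<phi>_def phic_def algebra_simps)

lemma deriv_phi:
  assumes "supn (\<phi> \<xi>0 w - z0) < \<rho>0"
  shows "((\<lambda>\<xi>. f (\<phi> \<xi> w)) has_field_derivative dfc f (\<phi> \<xi>0 w) (cvec nv)) (at \<xi>0)"
proof -
  have "\<phi> 0 w + cscale \<xi>0 (cvec nv) \<in> {z. supn (z - cvec x0) < \<rho>0}"
    using assms by (simp add: z0_def phi_shift[symmetric])
  from line_deriv[OF cd this] show ?thesis by (simp add: phi_shift[symmetric])
qed

lemma T_deriv:
  assumes "norm \<xi> < \<rho>1" "supn w < r"
  shows "(T w E has_field_derivative (1 - dfc f (\<phi> \<xi> w) (cvec nv) / \<mu>)) (at \<xi>)"
proof -
  have d: "((\<lambda>\<xi>. f (\<phi> \<xi> w)) has_field_derivative dfc f (\<phi> \<xi> w) (cvec nv)) (at \<xi>)"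
    by (rule deriv_phi[OF phi_in(3)[OF assms]])
  have "(T w E has_field_derivative (1 - (dfc f (\<phi> \<xi> w) (cvec nv) - 0) / complex_of_real \<mu>)) (at \<xi>)"
    unfolding T_def[abs_def]
    by (rule DERIV_diff[OF DERIV_ident DERIV_cdivide[OF DERIV_diff[OF d DERIV_const]]])
  then show ?thesis by simp
qed

lemma T_deriv_bound:
  assumes "norm \<xi> < \<rho>1" "supn w < r"
  shows "norm (1 - dfc f (\<phi> \<xi> w) (cvec nv) / \<mu>) \<le> 1/4"
proof -
  have "1 - dfc f (\<phi> \<xi> w) (cvec nv) / \<mu> = - (dfc f (\<phi> \<xi> w) (cvec nv) - \<mu>) / \<mu>"
    using \<mu>0 by (simp add: field_simps)
  then have "norm (1 - dfc f (\<phi> \<xi> w) (cvec nv) / \<mu>) = norm (dfc f (\<phi> \<xi> w) (cvec nv) - \<mu>) / \<mu>"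
    using \<mu>0 by (simp add: norm_divide norm_minus_commute)
  also have "\<dots> \<le> (\<mu>/4) / \<mu>"
    using dbound[OF phi_in(1)[OF assms]] \<mu>0 by (intro divide_right_mono) auto
  also have "\<dots> = 1/4" using \<mu>0 by simp
  finally show ?thesis .
qed

lemma T_contr:
  assumes "supn w < r" "norm \<xi>1 < \<rho>1" "norm \<xi>2 < \<rho>1"
  shows "norm (T w E \<xi>1 - T w E \<xi>2) \<le> 1/4 * norm (\<xi>1 - \<xi>2)"
proof (rule field_differentiable_bound[where S = "ball 0 \<rho>1"])
  show "convex (ball (0::complex) \<rho>1)" by simp
  fix z :: complex assume "z \<in> ball 0 \<rho>1"
  then have z: "norm z < \<rho>1" by simp
  show "(T w E has_field_derivative (1 - dfc f (\<phi> z w) (cvec nv) / \<mu>)) (at z within ball 0 \<rho>1)"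
    using T_deriv[OF z assms(1)] by (rule has_field_derivative_at_within)
  show "norm (1 - dfc f (\<phi> z w) (cvec nv) / \<mu>) \<le> 1/4" by (rule T_deriv_bound[OF z assms(1)])
qed (use assms in auto)

end

context setting begin

lemma phi0_taylor:
  assumes w: "supn w < r"
  shows "norm (f (\<phi> 0 w) - E0) \<le> N^4 * M2 * (supn w)^2"
proof -
  define u where "u = (\<Sum>j\<in>UNIV. cscale (w$j) (cvec (e j)))"
  have phi0: "\<phi> 0 w = z0 + u" using phi_sub[of 0 w] by (simp add: u_def algebra_simps)
  have su: "supn u \<le> m * supn w" unfolding u_def by (rule supn_u)
  have "m * supn w \<le> m * r" using w m1 by (intro mult_left_mono) auto
  also have "m * r \<le> \<rho>1"
  proof -
    have "m * r = (m * c) * \<rho>1" by (simp add: r_def)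
    also have "\<dots> \<le> 1 * \<rho>1" using mc \<rho>1 by (intro mult_right_mono) auto
    finally show ?thesis by simp
  qed
  also have "\<rho>1 < \<rho>0" using phi_in(2)[of 0 0] r_pos \<rho>1 by (simp add: supn_def)
  finally have su0: "supn u < \<rho>0" using su by simp
  have "norm (f (z0 + u) - f z0 - dfc f z0 u) \<le> real CARD('n) ^ 2 * M2 * (supn u)^2"
    unfolding z0_def by (rule taylor_poly[OF cd M2 su0])
  moreover have "dfc f z0 u = 0"
    unfolding u_def by (simp add: dfc_sum dfc_cscale dfc_z0_e)
  moreover have "(supn u)^2 \<le> (N * supn w)^2"
  proof (rule power_mono)
    show "supn u \<le> N * supn w" using su mN supn_nonneg[of w]
      by (metis add_increasing2 le_add_same_cancel1 less_eq_real_def mult_right_mono order_trans zero_less_one)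
  qed (rule supn_nonneg)
  ultimately have "norm (f (\<phi> 0 w) - E0) \<le> N^2 * M2 * (supn u)^2"
    unfolding phi0 E0_def N_def by simp
  also have "\<dots> \<le> N^2 * M2 * (N * supn w)^2"
    using M2_nonneg \<open>(supn u)^2 \<le> (N * supn w)^2\<close> by (intro mult_left_mono) auto
  also have "\<dots> = N^4 * M2 * (supn w)^2" by (simp add: power_mult_distrib field_simps)
  finally show ?thesis .
qed

lemma T0_bound:
  assumes w: "supn w < r" and E: "norm (E - E0) < r'"
  shows "2 * norm (T w E 0) \<le> 2 / \<mu> * (norm (E - E0) + N^4 * M2 * (supn w)^2)"
    and "2 * norm (T w E 0) < \<rho>1"
proof -
  have nT: "norm (T w E 0) = norm (f (\<phi> 0 w) - E) / \<mu>"
    using \<mu>0 by (simp add: T_def norm_divide norm_minus_commute)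
  have "norm (f (\<phi> 0 w) - E) \<le> norm (f (\<phi> 0 w) - E0) + norm (E - E0)"
    using norm_triangle_ineq[of "f (\<phi> 0 w) - E0" "E0 - E"] by (simp add: norm_minus_commute)
  also have "\<dots> \<le> N^4 * M2 * (supn w)^2 + norm (E - E0)"
    using phi0_taylor[OF w] by simp
  finally have A: "norm (f (\<phi> 0 w) - E) \<le> norm (E - E0) + N^4 * M2 * (supn w)^2" by simp
  then show "2 * norm (T w E 0) \<le> 2 / \<mu> * (norm (E - E0) + N^4 * M2 * (supn w)^2)"
    unfolding nT using \<mu>0 by (simp add: divide_right_mono field_simps)
  have sw: "(supn w)^2 \<le> r^2" using w supn_nonneg[of w] by (intro power_mono) auto
  have "N^4 * M2 * (supn w)^2 \<le> N^4 * M2 * r^2"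
    using sw M2_nonneg by (intro mult_left_mono) auto
  also have "\<dots> = (N^4 * c^2 * \<rho>1) * (\<rho>1 * M2)" by (simp add: r_def power2_eq_square)
  also have "\<dots> \<le> (N^4 * c^2 * \<rho>1) * (c * \<mu>)" using \<rho>1M \<rho>1 by (intro mult_left_mono) auto
  also have "N^4 * c^2 = 1/64"
  proof -
    have h: "N^2 * c = 1/8" using cN by simp
    have "N^4 * c^2 = (N^2 * c) * (N^2 * c)" by (simp add: power2_eq_square power4_eq_xxxx algebra_simps)
    then show ?thesis using h by simp
  qed
  finally have B: "N^4 * M2 * (supn w)^2 \<le> c * \<rho>1 * \<mu> / 64" by (simp add: ac_simps)
  have "r' \<le> c * \<rho>1 * \<mu>" unfolding r'_def using c_pos \<rho>1 by (intro mult_left_mono) auto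
  then have "norm (f (\<phi> 0 w) - E) < c * \<rho>1 * \<mu> + c * \<rho>1 * \<mu> / 64"
    using A B E by (smt (verit))
  then have "2 * norm (T w E 0) < 2 * ((c * \<rho>1 * \<mu> + c * \<rho>1 * \<mu> / 64) / \<mu>)"
    unfolding nT using \<mu>0 by (intro mult_strict_left_mono divide_strict_right_mono) auto
  also have "\<dots> = c * \<rho>1 * (65/32)" using \<mu>0 by (simp add: field_simps)
  also have "\<dots> < \<rho>1" using c_small \<rho>1 by (simp add: field_simps)
  finally show "2 * norm (T w E 0) < \<rho>1" .
qed

lemma fixp_iff: "T w E \<xi> = \<xi> \<longleftrightarrow> f (\<phi> \<xi> w) = E"
  using \<mu>0 by (simp add: T_def)

lemma exist_sol:
  assumes w: "supn w < r" and E: "norm (E - E0) < r'"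
  shows "\<exists>\<xi>. norm \<xi> \<le> 2 * norm (T w E 0) \<and> f (\<phi> \<xi> w) = E"
proof -
  define R where "R = 2 * norm (T w E 0)"
  have R: "R < \<rho>1" "0 \<le> R" using T0_bound(2)[OF w E] by (auto simp: R_def)
  have sub: "\<And>x. x \<in> cball 0 R \<Longrightarrow> norm x < \<rho>1" using R by auto
  have "\<exists>!x\<in>cball 0 R. T w E x = x"
  proof (rule Banach_fix[where c = "1/4"])
    show "complete (cball (0::complex) R)" by (simp add: complete_eq_closed)
    show "cball (0::complex) R \<noteq> {}" using R by simp
    show "T w E ` cball 0 R \<subseteq> cball 0 R"
    proof
      fix y assume "y \<in> T w E ` cball 0 R"
      then obtain x where x: "x \<in> cball 0 R" "y = T w E x" by auto
      have n0: "norm (0::complex) < \<rho>1" using \<rho>1 by simp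
      have "norm (T w E x - T w E 0) \<le> 1/4 * norm (x - 0)"
        by (rule T_contr[OF w sub[OF x(1)] n0])
      then have "norm (T w E x) \<le> 1/4 * norm x + norm (T w E 0)"
        using norm_triangle_ineq[of "T w E x - T w E 0" "T w E 0"] by simp
      also have "\<dots> \<le> 1/4 * R + R/2" using x(1) by (simp add: R_def)
      also have "\<dots> \<le> R" using R by simp
      finally show "y \<in> cball 0 R" using x by simp
    qed
    fix x y :: complex assume "x \<in> cball 0 R" "y \<in> cball 0 R"
    then show "dist (T w E x) (T w E y) \<le> 1/4 * dist x y"
      using T_contr[OF w sub sub] by (simp add: dist_norm)
  qed auto
  then obtain x where "x \<in> cball 0 R" "T w E x = x" by blast
  then show ?thesis using fixp_iff by (auto simp: R_def)
qed

lemma uniq_sol: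
  assumes w: "supn w < r"
    and "norm \<xi>1 < \<rho>1" "f (\<phi> \<xi>1 w) = E" "norm \<xi>2 < \<rho>1" "f (\<phi> \<xi>2 w) = E"
  shows "\<xi>1 = \<xi>2"
proof -
  have "norm (\<xi>1 - \<xi>2) = norm (T w E \<xi>1 - T w E \<xi>2)" using assms fixp_iff by metis
  also have "\<dots> \<le> 1/4 * norm (\<xi>1 - \<xi>2)" using T_contr assms by blast
  finally show ?thesis by simp
qed

definition "g w E = (THE \<xi>. norm \<xi> < \<rho>1 \<and> f (\<phi> \<xi> w) = E)"

lemma g_props:
  assumes w: "supn w < r" and E: "norm (E - E0) < r'"
  shows "norm (g w E) < \<rho>1" "f (\<phi> (g w E) w) = E"
    "norm (g w E) \<le> 2 * norm (T w E 0)"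
    "\<And>\<xi>. norm \<xi> < \<rho>1 \<Longrightarrow> f (\<phi> \<xi> w) = E \<Longrightarrow> \<xi> = g w E"
proof -
  obtain \<xi> where \<xi>: "norm \<xi> \<le> 2 * norm (T w E 0)" "f (\<phi> \<xi> w) = E" using exist_sol[OF w E] by blast
  have \<xi>1: "norm \<xi> < \<rho>1" using \<xi>(1) T0_bound(2)[OF w E] by simp
  have ex1: "\<exists>!\<xi>. norm \<xi> < \<rho>1 \<and> f (\<phi> \<xi> w) = E"
    using \<xi>1 \<xi>(2) uniq_sol[OF w] by blast
  have gp: "norm (g w E) < \<rho>1 \<and> f (\<phi> (g w E) w) = E"
    unfolding g_def by (rule theI'[OF ex1])
  then show "norm (g w E) < \<rho>1" "f (\<phi> (g w E) w) = E" by auto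
  have "g w E = \<xi>" using uniq_sol[OF w] gp \<xi>1 \<xi>(2) by blast
  then show "norm (g w E) \<le> 2 * norm (T w E 0)" using \<xi>(1) by simp
  fix \<zeta> assume "norm \<zeta> < \<rho>1" "f (\<phi> \<zeta> w) = E"
  then show "\<zeta> = g w E" using uniq_sol[OF w] gp by blast
qed

end

lemma cscale_sum: "cscale a (\<Sum>j\<in>A. F j) = (\<Sum>j\<in>A. cscale a (F j))"
  by (simp add: vec_eq_iff sum_component sum_distrib_left)

context setting begin

definition "Lw w = (\<Sum>j\<in>UNIV. cscale (w$j) (cvec (e j)))"

lemma Lw_add: "Lw (a + b) = Lw a + Lw b"
  by (simp add: Lw_def cscale_add_left sum.distrib)
lemma Lw_cscale: "Lw (cscale a h) = cscale a (Lw h)"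
  by (simp add: Lw_def cscale_sum cscale_mult)
lemma Lw_scaleR: "Lw (t *\<^sub>R a) = t *\<^sub>R Lw a"
  by (simp only: scaleR_cscale Lw_cscale)
lemma bl_Lw: "bounded_linear Lw"
proof -
  have "linear Lw" by (intro linearI Lw_add Lw_scaleR)
  then show ?thesis by (simp add: linear_conv_bounded_linear)
qed

lemma phi_eq: "\<phi> \<xi> w = z0 + (cscale \<xi> (cvec nv) + Lw w)"
  by (simp add: \<phi>_def phic_def z0_def Lw_def add.assoc)

definition "Dom = {(w::complex^'m, E). supn w < r \<and> cmod (E - E0) < r'}"

lemma open_Dom: "open Dom"
proof -
  have eq: "Dom = (\<Inter>i. {p. norm ((fst p) $ i) < r}) \<inter> {p. norm (snd p - E0) < r'}"
    by (auto simp: Dom_def supn_lt_iff)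
  have bl: "bounded_linear (\<lambda>p::((complex^'m) \<times> complex). (fst p) $ i)" for i
    using bounded_linear_compose[OF bounded_linear_vec_nth[of i] bounded_linear_fst] by (simp add: o_def)
  have o1: "open {p::((complex^'m) \<times> complex). norm ((fst p) $ i) < r}" for i
  proof -
    have "continuous_on UNIV (\<lambda>p::((complex^'m) \<times> complex). norm ((fst p) $ i))"
      by (intro continuous_on_norm linear_continuous_on bl)
    then show ?thesis by (rule open_Collect_less[OF _ continuous_on_const])
  qed
  have o2: "open {p::((complex^'m) \<times> complex). norm (snd p - E0) < r'}"
    by (rule open_Collect_less) (auto intro!: continuous_intros)
  have o3: "open (\<Inter>i. {p::((complex^'m) \<times> complex). norm ((fst p) $ i) < r})"
    by (rule open_INT) (simp_all add: o1)
  show ?thesis unfolding eq using o3 o2 by (rule open_Int)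
qed

lemma Dom_iff: "p \<in> Dom \<longleftrightarrow> supn (fst p) < r \<and> cmod (snd p - E0) < r'"
  by (cases p) (simp add: Dom_def)

definition "gp p = g (fst p) (snd p)"

lemma gp_props: assumes "p \<in> Dom"
  shows "norm (gp p) < \<rho>1" "f (\<phi> (gp p) (fst p)) = snd p"
    "\<And>\<xi>. norm \<xi> < \<rho>1 \<Longrightarrow> f (\<phi> \<xi> (fst p)) = snd p \<Longrightarrow> \<xi> = gp p"
proof -
  from assms have "supn (fst p) < r \<and> cmod (snd p - E0) < r'" by (simp only: Dom_iff)
  then have a: "supn (fst p) < r" "cmod (snd p - E0) < r'" by auto
  show "norm (gp p) < \<rho>1" "f (\<phi> (gp p) (fst p)) = snd p" 
    unfolding gp_def using g_props(1,2)[OF a] by auto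
  fix \<xi> assume "norm \<xi> < \<rho>1" "f (\<phi> \<xi> (fst p)) = snd p"
  then show "\<xi> = gp p" unfolding gp_def using g_props(4)[OF a] by simp
qed

lemma gp_fix: "p \<in> Dom \<Longrightarrow> T (fst p) (snd p) (gp p) = gp p"
  unfolding fixp_iff by (rule gp_props(2))

lemma gp_cont: assumes q: "q \<in> Dom" shows "isCont gp q"
proof -
  define \<xi>q where "\<xi>q = gp q"
  define H where "H p = T (fst p) (snd p) \<xi>q - T (fst q) (snd q) \<xi>q" for p
  have \<xi>q: "norm \<xi>q < \<rho>1" unfolding \<xi>q_def by (rule gp_props(1)[OF q])
  have est: "norm (gp p - gp q) \<le> 2 * norm (H p)" if p: "p \<in> Dom" for p
  proof -
    from p have "supn (fst p) < r \<and> cmod (snd p - E0) < r'" by (simp only: Dom_iff)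
    then have wp: "supn (fst p) < r" by simp
    have gpn: "norm (gp p) < \<rho>1" by (rule gp_props(1)[OF p])
    have "gp p - gp q = (T (fst p) (snd p) (gp p) - T (fst p) (snd p) \<xi>q) + H p"
      using gp_fix[OF p] gp_fix[OF q] by (simp add: H_def \<xi>q_def)
    then have "norm (gp p - gp q) \<le> norm (T (fst p) (snd p) (gp p) - T (fst p) (snd p) \<xi>q) + norm (H p)"
      by (simp only: norm_triangle_ineq)
    also have "\<dots> \<le> 1/4 * norm (gp p - gp q) + norm (H p)"
      using T_contr[OF wp gpn \<xi>q] by (simp add: \<xi>q_def)
    finally show ?thesis using norm_ge_zero[of "H p"] by linarith
  qed
  have zP: "supn (\<phi> \<xi>q (fst q) - cvec x0) < \<rho>0"
  proof -
    from q have "supn (fst q) < r \<and> cmod (snd q - E0) < r'" by (simp only: Dom_iff)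
    then show ?thesis using phi_in(3)[OF \<xi>q] unfolding z0_def by simp
  qed
  have fc: "isCont f (\<phi> \<xi>q (fst q))"
    using has_derivative_continuous[OF cdiff_has_derivative[OF cd]] zP by simp
  have pc: "((\<lambda>p. \<phi> \<xi>q (fst p)) \<longlongrightarrow> \<phi> \<xi>q (fst q)) (at q)"
    unfolding phi_eq
    by (intro tendsto_add tendsto_const bounded_linear.tendsto[OF bl_Lw] tendsto_fst tendsto_ident_at)
  have "(H \<longlongrightarrow> H q) (at q)"
    unfolding H_def T_def
    by (intro tendsto_diff tendsto_const tendsto_divide isCont_tendsto_compose[OF fc pc] tendsto_snd tendsto_ident_at) (use \<mu>0 in auto)
  then have H0: "(H \<longlongrightarrow> 0) (at q)" by (simp add: H_def)
  have ev: "\<forall>\<^sub>F p in at q. norm (gp p - gp q) \<le> 2 * norm (H p)"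
    using eventually_at_in_open'[OF open_Dom q] by (rule eventually_mono) (rule est)
  have "((\<lambda>p. gp p - gp q) \<longlongrightarrow> 0) (at q)"
    by (rule Lim_null_comparison[OF ev]) (use tendsto_mult_right_zero[OF tendsto_norm_zero[OF H0], of 2] in simp)
  then have "(gp \<longlongrightarrow> gp q) (at q)" by (rule LIM_zero_cancel)
  then show ?thesis by (simp add: isCont_def)
qed

end

context setting begin

lemma g_analytic: "analytic_pair_on g Dom"
  unfolding analytic_pair_on_def cdiff_on_def
proof (intro conjI open_Dom ballI)
  fix y assume y: "y \<in> Dom"
  define w where "w = fst y"
  define \<xi> where "\<xi> = gp y"
  define z where "z = \<phi> \<xi> w"
  have ywr: "supn w < r \<and> cmod (snd y - E0) < r'" using y unfolding w_def by (simp only: Dom_iff)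
  have \<xi>1: "norm \<xi> < \<rho>1" unfolding \<xi>_def by (rule gp_props(1)[OF y])
  have zP: "supn (z - cvec x0) < \<rho>0" using phi_in(3)[OF \<xi>1] ywr by (simp add: z_def z0_def)
  define a where "a = dfc f z (cvec nv)"
  have "norm (a - \<mu>) \<le> \<mu>/4" unfolding a_def z_def using dbound phi_in(1)[OF \<xi>1] ywr by simp
  then have a0: "a \<noteq> 0" using \<mu>0 by auto
  define A where "A h = dfc f z (Lw h)" for h
  have A_add: "A (h1 + h2) = A h1 + A h2" for h1 h2 by (simp add: A_def Lw_add dfc_add)
  have A_scale: "A (t *\<^sub>R h) = complex_of_real t * A h" for t h
    by (simp add: A_def scaleR_cscale Lw_cscale dfc_cscale)
  have A_i: "A (cscale \<i> h) = \<i> * A h" for h by (simp add: A_def Lw_cscale dfc_cscale)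
  define Lf where "Lf p = cscale (snd p) (cvec nv) + Lw (fst p)" for p :: "(complex^'m) \<times> complex"
  have blLf: "bounded_linear Lf"
  proof -
    have "linear Lf"
    proof (intro linearI)
      fix p q :: "(complex^'m) \<times> complex" and t :: real
      show "Lf (p + q) = Lf p + Lf q" by (simp add: Lf_def cscale_add_left Lw_add algebra_simps)
      show "Lf (t *\<^sub>R p) = t *\<^sub>R Lf p" by (simp add: Lf_def cscale_scaleR_left Lw_scaleR scaleR_add_right)
    qed
    then show ?thesis by (simp add: linear_conv_bounded_linear)
  qed
  define \<Psi> where "\<Psi> p = (fst p, f (\<phi> (snd p) (fst p)))" for p :: "(complex^'m) \<times> complex"
  define \<Psi>' where "\<Psi>' q = (fst q, dfc f z (Lf q))" for q :: "(complex^'m) \<times> complex"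
  define G where "G p = (fst p, gp p)" for p :: "(complex^'m) \<times> complex"
  define g' where "g' q = (fst q, (snd q - A (fst q)) / a)" for q :: "(complex^'m) \<times> complex"
  have Gy: "G y = (w, \<xi>)" by (simp add: G_def w_def \<xi>_def)
  have in_eq: "\<phi> (snd p) (fst p) = z0 + Lf p" for p by (simp add: phi_eq Lf_def)
  have d1: "((\<lambda>p. z0 + Lf p) has_derivative Lf) (at (G y))"
    using has_derivative_add[OF has_derivative_const bounded_linear_imp_has_derivative[OF blLf], of z0] by simp
  have zeq: "z0 + Lf (G y) = z" by (simp add: Gy z_def in_eq[of "(w, \<xi>)", symmetric])
  have d2: "(f has_derivative dfc f z) (at (z0 + Lf (G y)))"
    unfolding zeq using cdiff_has_derivative[OF cd] zP by simp
  have d3: "((\<lambda>p. f (z0 + Lf p)) has_derivative (\<lambda>q. dfc f z (Lf q))) (at (G y))"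
    using diff_chain_at[OF d1 d2] by (simp add: o_def)
  have dPsi: "(\<Psi> has_derivative \<Psi>') (at (G y))"
  proof -
    have "((\<lambda>p. (fst p, f (z0 + Lf p))) has_derivative (\<lambda>q. (fst q, dfc f z (Lf q)))) (at (G y))"
      by (rule has_derivative_Pair[OF has_derivative_fst[OF has_derivative_ident] d3])
    then show ?thesis unfolding \<Psi>_def \<Psi>'_def in_eq .
  qed
  have blg': "bounded_linear g'"
  proof -
    have "linear g'"
    proof (intro linearI)
      fix p q :: "(complex^'m) \<times> complex" and t :: real
      show "g' (p + q) = g' p + g' q"
        by (simp add: g'_def A_add add_divide_distrib[symmetric] algebra_simps)
      have "g' (t *\<^sub>R p) = (t *\<^sub>R fst p, (t *\<^sub>R snd p - A (t *\<^sub>R fst p)) / a)"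
        by (simp add: g'_def)
      also have "\<dots> = (t *\<^sub>R fst p, t *\<^sub>R ((snd p - A (fst p)) / a))"
        by (simp only: A_scale scaleR_conv_of_real[of t "snd p"] scaleR_conv_of_real[of t "(snd p - A (fst p)) / a"])
           (simp add: algebra_simps)
      also have "\<dots> = t *\<^sub>R g' p" by (simp add: g'_def)
      finally show "g' (t *\<^sub>R p) = t *\<^sub>R g' p" .
    qed
    then show ?thesis by (simp add: linear_conv_bounded_linear)
  qed
  have inv: "g' \<circ> \<Psi>' = id"
  proof
    fix q :: "(complex^'m) \<times> complex"
    have "Lf q = cscale (snd q) (cvec nv) + Lw (fst q)" by (simp add: Lf_def)
    then have "dfc f z (Lf q) = snd q * a + A (fst q)" by (simp add: dfc_add dfc_cscale a_def A_def)
    then show "(g' \<circ> \<Psi>') q = id q" using a0 by (simp add: g'_def \<Psi>'_def)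
  qed
  have contG: "continuous (at y) G"
    unfolding G_def by (intro continuous_Pair continuous_fst continuous_ident gp_cont[OF y, unfolded isCont_def[symmetric]])
  have fg: "\<Psi> (G p) = p" if "p \<in> Dom" for p
    using gp_props(2)[OF that] by (simp add: \<Psi>_def G_def)
  have dG: "(G has_derivative g') (at y)"
    by (rule has_derivative_inverse_basic[OF dPsi blg' inv contG open_Dom y fg])
  have dg: "((\<lambda>p. snd (G p)) has_derivative (\<lambda>q. snd (g' q))) (at y)"
    by (rule has_derivative_snd[OF dG])
  moreover have "(\<lambda>p. snd (G p)) = (\<lambda>(w, E). g w E)" by (auto simp: G_def gp_def)
  ultimately have "((\<lambda>(w, E). g w E) has_derivative (\<lambda>q. snd (g' q))) (at y)" by simp
  moreover have "\<forall>h. snd (g' ((\<lambda>(w, E). (cscale \<i> w, \<i> * E)) h)) = \<i> * snd (g' h)"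
    by (auto simp: g'_def A_i algebra_simps diff_divide_distrib)
  ultimately show "\<exists>D. ((\<lambda>(w, E). g w E) has_derivative D) (at y) \<and>
      (\<forall>h. D ((\<lambda>(w, E). (cscale \<i> w, \<i> * E)) h) = \<i> * D h)" by blast
qed

end

context setting begin

lemma e_inj: "inj e"
proof (rule injI)
  fix i j assume "e i = e j"
  then have "e i \<bullet> e j = 1" using eo by (simp add: )
  then show "i = j" using eo by (metis zero_neq_one)
qed

lemma nv_notin: "nv \<notin> range e"
proof
  assume "nv \<in> range e"
  then obtain j where "nv = e j" by auto
  then have "nv \<bullet> nv = 0" using en by simp
  moreover have "nv \<bullet> nv = 1" using norm_nv by (simp add: norm_eq_sqrt_inner)
  ultimately show False by simp
qed

lemma span_all: "x \<in> span (insert nv (range e))"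
proof -
  define B where "B = insert nv (range e)"
  have po: "pairwise orthogonal B"
    unfolding pairwise_def B_def orthogonal_def
    using eo en e_inj by (auto simp: inner_commute inj_eq)
  have z: "0 \<notin> B" unfolding B_def using norm_nv norm_e by (auto) (metis norm_zero zero_neq_one)
  have ind: "independent B" by (rule pairwise_orthogonal_independent[OF po z])
  have "card B = CARD('m) + 1"
    unfolding B_def using nv_notin e_inj by (simp add: card_image)
  then have "dim (UNIV :: (real^'n) set) \<le> card B" using card by simp
  then have "UNIV \<subseteq> span B" by (rule card_ge_dim_independent[OF subset_UNIV ind])
  then show ?thesis by (auto simp: B_def)
qed

lemma expand:
  fixes d :: "real^'n"
  defines "y \<equiv> (\<chi> j. d \<bullet> e j)"
  shows "d = (d \<bullet> nv) *\<^sub>R nv + (\<Sum>j\<in>UNIV. (y $ j) *\<^sub>R e j)"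
proof -
  define v where "v = d - ((d \<bullet> nv) *\<^sub>R nv + (\<Sum>j\<in>UNIV. (y $ j) *\<^sub>R e j))"
  have nn: "nv \<bullet> nv = 1" using norm_nv by (simp add: norm_eq_sqrt_inner)
  have o1: "v \<bullet> nv = 0"
    unfolding v_def using nn en by (simp add: inner_diff_left inner_add_left inner_sum_left)
  have o2: "v \<bullet> e k = 0" for k
  proof -
    have "(\<Sum>j\<in>UNIV. y $ j * (e j \<bullet> e k)) = (\<Sum>j\<in>UNIV. if j = k then y $ k else 0)"
      using eo by (intro sum.cong) auto
    moreover have "nv \<bullet> e k = 0" using en by (simp add: inner_commute)
    ultimately show ?thesis
      unfolding v_def by (simp add: inner_diff_left inner_add_left inner_sum_left y_def)
  qed
  have vs: "v \<in> span (insert nv (range e))" by (rule span_all)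
  have "orthogonal v v"
    by (rule orthogonal_to_span[OF vs]) (use o1 o2 in \<open>auto simp: orthogonal_def\<close>)
  then have "v = 0" by (simp add: orthogonal_def)
  then show ?thesis by (simp add: v_def)
qed

lemma partb:
  assumes x': "norm (x' - x0) < r" and E: "cmod (E - E0) < r'" and fx: "f (cvec x') = E"
  shows "\<exists>y :: real^'m. norm y \<le> norm (x' - x0) \<and> cvec x' = \<phi> (g (cvec y) E) (cvec y)"
proof -
  define d where "d = x' - x0"
  define y :: "real^'m" where "y = (\<chi> j. d \<bullet> e j)"
  define \<xi>r where "\<xi>r = d \<bullet> nv"
  have dexp: "d = \<xi>r *\<^sub>R nv + (\<Sum>j\<in>UNIV. (y $ j) *\<^sub>R e j)"
    unfolding \<xi>r_def y_def by (rule expand)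
  have "d \<bullet> d = \<xi>r * (d \<bullet> nv) + (\<Sum>j\<in>UNIV. y $ j * (d \<bullet> e j))"
    by (subst (1) dexp) (simp add: inner_add_right inner_sum_right)
  also have "\<dots> = \<xi>r^2 + y \<bullet> y"
    by (simp add: \<xi>r_def y_def inner_vec_def power2_eq_square)
  finally have "y \<bullet> y \<le> d \<bullet> d" by simp
  then have ny: "norm y \<le> norm d" by (simp add: norm_eq_sqrt_inner)
  have n\<xi>: "\<bar>\<xi>r\<bar> \<le> norm d"
    using Cauchy_Schwarz_ineq2[of d nv] norm_nv by (simp add: \<xi>r_def)
  have cx: "cvec x' = \<phi> (complex_of_real \<xi>r) (cvec y)"
  proof -
    have "cvec x' $ k = \<phi> (complex_of_real \<xi>r) (cvec y) $ k" for k
    proof -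
      have dk: "d $ k = \<xi>r * nv $ k + (\<Sum>j\<in>UNIV. y $ j * e j $ k)"
        by (subst (1) dexp) (simp add: sum_component)
      have "cvec x' $ k = complex_of_real (x0 $ k + d $ k)" by (simp add: d_def)
      also have "\<dots> = \<phi> (complex_of_real \<xi>r) (cvec y) $ k"
        unfolding dk by (simp add: \<phi>_def phic_def sum_component)
      finally show ?thesis .
    qed
    then show ?thesis by (simp add: vec_eq_iff)
  qed
  have w: "supn (cvec y) < r" using supn_cvec[of y] ny x' by (simp add: d_def)
  have \<xi>: "norm (complex_of_real \<xi>r) < \<rho>1" using n\<xi> x' r_lt by (simp add: d_def)
  have "complex_of_real \<xi>r = g (cvec y) E"
    by (rule g_props(4)[OF w E \<xi>]) (use fx cx in simp)
  then show ?thesis using cx ny by (auto simp: d_def)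
qed

end

context setting begin
lemma rr: "r = c * \<rho>1" "r' = c * \<rho>1 * min 1 \<mu>" "E0 = f (cvec x0)" "\<phi> = phic x0 nv e"
  by (simp_all add: r_def r'_def E0_def z0_def \<phi>_def)

lemma part1:
  assumes w: "supn w < c * \<rho>1" and E: "cmod (E - f (cvec x0)) < c * \<rho>1 * min 1 \<mu>"
  shows "cmod (g w E) < \<rho>1 \<and> f (phic x0 nv e (g w E) w) = E \<and>
        (\<forall>\<xi>. cmod \<xi> < \<rho>1 \<and> f (phic x0 nv e \<xi> w) = E \<longrightarrow> \<xi> = g w E)"
proof -
  have w': "supn w < r" and E': "cmod (E - E0) < r'" using w E by (simp_all add: rr)
  have a: "cmod (g w E) < \<rho>1" by (rule g_props(1)[OF w' E'])
  have b: "f (phic x0 nv e (g w E) w) = E" using g_props(2)[OF w' E'] by (simp add: rr)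
  have c: "\<forall>\<xi>. cmod \<xi> < \<rho>1 \<and> f (phic x0 nv e \<xi> w) = E \<longrightarrow> \<xi> = g w E"
  proof (intro allI impI)
    fix \<xi> assume "cmod \<xi> < \<rho>1 \<and> f (phic x0 nv e \<xi> w) = E"
    then show "\<xi> = g w E" using g_props(4)[OF w' E', of \<xi>] by (simp add: rr)
  qed
  show ?thesis using a b c by blast
qed
end

context setting begin
lemma rr2: "r = c * \<rho>1" "r' = c * \<rho>1 * min 1 \<mu>" "E0 = f (cvec x0)" "\<phi> = phic x0 nv e"
  by (simp_all add: r_def r'_def E0_def z0_def \<phi>_def)

lemma part2: "analytic_pair_on g {(w, E). supn w < c * \<rho>1 \<and> cmod (E - f (cvec x0)) < c * \<rho>1 * min 1 \<mu>}"
proof -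
  have "Dom = {(w, E). supn w < c * \<rho>1 \<and> cmod (E - f (cvec x0)) < c * \<rho>1 * min 1 \<mu>}"
    unfolding Dom_def rr2 ..
  then show ?thesis using g_analytic by simp
qed

lemma part3:
  assumes w: "supn w < c * \<rho>1" and E: "cmod (E - f (cvec x0)) < c * \<rho>1 * min 1 \<mu>"
  shows "cmod (g w E) \<le> 2 / \<mu> * (cmod (E - f (cvec x0)) + real CARD('n) ^ 4 * M2 * (supn w)\<^sup>2)"
proof -
  have w': "supn w < r" and E': "cmod (E - E0) < r'" using w E by (simp_all add: rr2)
  have "cmod (g w E) \<le> 2 * norm (T w E 0)" by (rule g_props(3)[OF w' E'])
  also have "\<dots> \<le> 2 / \<mu> * (norm (E - E0) + N^4 * M2 * (supn w)^2)" by (rule T0_bound(1)[OF w' E'])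
  finally show ?thesis by (simp add: rr2 N_def)
qed

lemma part4:
  assumes x: "norm (x0' - x0) < c * \<rho>1" and E: "cmod (E - f (cvec x0)) < c * \<rho>1 * min 1 \<mu>"
      and fx: "f (cvec x0') = E"
  shows "\<exists>y :: real^'m. norm y \<le> norm (x0' - x0) \<and> cvec x0' = phic x0 nv e (g (cvec y) E) (cvec y)"
proof -
  have x': "norm (x0' - x0) < r" and E': "cmod (E - E0) < r'" using x E by (simp_all add: rr2)
  show ?thesis using partb[OF x' E' fx] by (simp add: rr2)
qed
end

lemma final:
  fixes f :: "complex^'n \<Rightarrow> complex" and x0 :: "real^'n" and e :: "'m::finite \<Rightarrow> real^'n"
  assumes card: "CARD('n) = CARD('m) + 1" and cdef: "c = 1/(8 * real CARD('n)^2)"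
  and H1: "0 < \<rho>0" and H2: "analytic_vec_on f {z. supn (z - cvec x0) < \<rho>0}"
  and H3: "\<forall>x. cvec x \<in> {z. supn (z - cvec x0) < \<rho>0} \<longrightarrow> f (cvec x) \<in> \<real>"
  and H4: "bdd_above {cmod (cpd i (cpd j f) z) |i j z. z \<in> {z. supn (z - cvec x0) < \<rho>0}}"
  and H5: "0 < norm (rgrad f x0)"
  and H6: "\<forall>i j. e i \<bullet> e j = (if i = j then 1 else 0)"
  and H7: "\<forall>j. e j \<bullet> (1 / norm (rgrad f x0)) *\<^sub>R rgrad f x0 = 0"
  and H8: "\<rho>1 \<le> c * \<rho>0"
  and H9: "\<rho>1 * Sup {cmod (cpd i (cpd j f) z) |i j z. z \<in> {z. supn (z - cvec x0) < \<rho>0}} \<le> c * norm (rgrad f x0)"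
  shows "\<exists>g :: complex^'m \<Rightarrow> complex \<Rightarrow> complex.
       (\<forall>w E. supn w < c * \<rho>1 \<longrightarrow> cmod (E - f (cvec x0)) < c * \<rho>1 * min 1 (norm (rgrad f x0)) \<longrightarrow>
          cmod (g w E) < \<rho>1 \<and> f (phic x0 ((1 / norm (rgrad f x0)) *\<^sub>R rgrad f x0) e (g w E) w) = E \<and>
          (\<forall>\<xi>. cmod \<xi> < \<rho>1 \<and> f (phic x0 ((1 / norm (rgrad f x0)) *\<^sub>R rgrad f x0) e \<xi> w) = E \<longrightarrow> \<xi> = g w E)) \<and>
       analytic_pair_on g {(w, E). supn w < c * \<rho>1 \<and> cmod (E - f (cvec x0)) < c * \<rho>1 * min 1 (norm (rgrad f x0))} \<and>
       (\<forall>w E. supn w < c * \<rho>1 \<longrightarrow> cmod (E - f (cvec x0)) < c * \<rho>1 * min 1 (norm (rgrad f x0)) \<longrightarrow>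
          cmod (g w E) \<le> 2 / norm (rgrad f x0) * (cmod (E - f (cvec x0)) +
            real CARD('n) ^ 4 * Sup {cmod (cpd i (cpd j f) z) |i j z. z \<in> {z. supn (z - cvec x0) < \<rho>0}} * (supn w)\<^sup>2)) \<and>
       (\<forall>x0' E. norm (x0' - x0) < c * \<rho>1 \<longrightarrow> cmod (E - f (cvec x0)) < c * \<rho>1 * min 1 (norm (rgrad f x0)) \<longrightarrow>
          f (cvec x0') = E \<longrightarrow>
          (\<exists>y :: real^'m. norm y \<le> norm (x0' - x0) \<and>
             cvec x0' = phic x0 ((1 / norm (rgrad f x0)) *\<^sub>R rgrad f x0) e (g (cvec y) E) (cvec y)))"
proof (cases "\<rho>1 > 0")
  case False
  have c0: "c > 0" by (simp add: cdef)
  have cr: "c * \<rho>1 \<le> 0" using False c0 by (simp add: mult_le_0_iff)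
  have nw: "\<not> supn w < c * \<rho>1" for w :: "complex^'m"
    using supn_nonneg[of w] cr by linarith
  have nx: "\<not> norm (x' - x0) < c * \<rho>1" for x' :: "real^'n"
    using norm_ge_zero[of "x' - x0"] cr by linarith
  show ?thesis
    by (intro exI[of _ "\<lambda>w E. 0"] conjI allI impI) (simp_all add: nw nx analytic_pair_on_def cdiff_on_def)
next
  case True
  define M2 where "M2 = Sup {cmod (cpd i (cpd j f) z) |i j z. z \<in> {z. supn (z - cvec x0) < \<rho>0}}"
  define \<mu> where "\<mu> = norm (rgrad f x0)"
  define nv where "nv = (1/\<mu>) *\<^sub>R rgrad f x0"
  have st: "setting f x0 \<rho>0 \<rho>1 M2 \<mu> c nv e"
  proof
    show "CARD('n) = CARD('m) + 1" by (rule card)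
    show "cdiff_on f (cscale \<i>) {z. supn (z - cvec x0) < \<rho>0}"
      using H2 by (simp add: analytic_vec_on_def)
    show "0 < \<rho>0" by (rule H1)
    show "\<forall>x. supn (cvec x - cvec x0) < \<rho>0 \<longrightarrow> f (cvec x) \<in> \<real>" using H3 by simp
    fix w i j assume "supn (w - cvec x0) < \<rho>0"
    then show "norm (cpd i (cpd j f) w) \<le> M2"
      unfolding M2_def by (intro cSup_upper H4) auto
  next
    show "\<mu> = norm (rgrad f x0)" by (simp add: \<mu>_def)
    show "\<mu> > 0" using H5 by (simp add: \<mu>_def)
    show "nv = (1/\<mu>) *\<^sub>R rgrad f x0" by (simp add: nv_def)
    show "\<forall>i j. e i \<bullet> e j = (if i = j then 1 else 0)" by (rule H6)
    show "\<forall>j. e j \<bullet> nv = 0" unfolding nv_def \<mu>_def by (rule H7)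
    show "\<rho>1 > 0" by (rule True)
    show "\<rho>1 \<le> c * \<rho>0" by (rule H8)
    show "\<rho>1 * M2 \<le> c * \<mu>" unfolding M2_def \<mu>_def by (rule H9)
    show "c = 1/(8 * real CARD('n)^2)" by (rule cdef)
  qed
  interpret S: setting f x0 \<rho>0 \<rho>1 M2 \<mu> c nv e by (rule st)
  show ?thesis
    unfolding M2_def[symmetric] \<mu>_def[symmetric] nv_def[symmetric]
  proof (rule exI[of _ "S.g"], intro conjI allI impI)
    fix w :: "complex^'m" and E assume "supn w < c * \<rho>1" "cmod (E - f (cvec x0)) < c * \<rho>1 * min 1 \<mu>"
    then show "cmod (S.g w E) < \<rho>1" 
      "f (phic x0 nv e (S.g w E) w) = E"
      using S.part1 by blast+
  next
    fix w :: "complex^'m" and E \<xi> assume "supn w < c * \<rho>1" "cmod (E - f (cvec x0)) < c * \<rho>1 * min 1 \<mu>"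
      "cmod \<xi> < \<rho>1 \<and> f (phic x0 nv e \<xi> w) = E"
    then show "\<xi> = S.g w E"
      using S.part1 by blast
  next
    show "analytic_pair_on (S.g) {(w, E). supn w < c * \<rho>1 \<and> cmod (E - f (cvec x0)) < c * \<rho>1 * min 1 \<mu>}"
      by (rule S.part2)
  next
    fix w :: "complex^'m" and E assume "supn w < c * \<rho>1" "cmod (E - f (cvec x0)) < c * \<rho>1 * min 1 \<mu>"
    then show "cmod (S.g w E) \<le> 2 / \<mu> * (cmod (E - f (cvec x0)) + real CARD('n) ^ 4 * M2 * (supn w)\<^sup>2)"
      by (rule S.part3)
  next
    fix x0' E assume "norm (x0' - x0) < c * \<rho>1" "cmod (E - f (cvec x0)) < c * \<rho>1 * min 1 \<mu>" "f (cvec x0') = E"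
    then show "\<exists>y :: real^'m. norm y \<le> norm (x0' - x0) \<and> cvec x0' = phic x0 nv e (S.g (cvec y) E) (cvec y)"
      by (rule S.part4)
  qed
qed

theorem lemma4p4:
  assumes "CARD('n::finite) = CARD('m::finite) + 1"
  shows "\<exists>c>0. \<exists>C::real. \<forall>(f :: complex^'n \<Rightarrow> complex) (x0 :: real^'n) (\<rho>0::real) (\<rho>1::real)
      (e :: 'm \<Rightarrow> real^'n).
    let P = {z. supn (z - cvec x0) < \<rho>0};
        M2 = Sup {cmod (cpd i (cpd j f) z) | i j z. z \<in> P};
        \<mu> = norm (rgrad f x0);
        nv = (1/\<mu>) *\<^sub>R rgrad f x0;
        E0 = f (cvec x0);
        r = c * \<rho>1;
        r' = c * \<rho>1 * min 1 \<mu>;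
        \<phi> = phic x0 nv e
    in (\<rho>0 > 0 \<and> analytic_vec_on f P \<and> (\<forall>x. cvec x \<in> P \<longrightarrow> f (cvec x) \<in> \<real>) \<and>
        bdd_above {cmod (cpd i (cpd j f) z) | i j z. z \<in> P} \<and>
        \<mu> > 0 \<and>
        (\<forall>i j. e i \<bullet> e j = (if i = j then 1 else 0)) \<and> (\<forall>j. e j \<bullet> nv = 0) \<and>
        \<rho>1 \<le> c * \<rho>0 \<and> \<rho>1 * M2 \<le> c * \<mu>)
    \<longrightarrow> (\<exists>g :: complex^'m \<Rightarrow> complex \<Rightarrow> complex.
          (\<forall>w E. supn w < r \<longrightarrow> cmod (E - E0) < r' \<longrightarrow>
              cmod (g w E) < \<rho>1 \<and> f (\<phi> (g w E) w) = E \<and>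
              (\<forall>\<xi>. cmod \<xi> < \<rho>1 \<and> f (\<phi> \<xi> w) = E \<longrightarrow> \<xi> = g w E)) \<and>
          analytic_pair_on g {(w, E). supn w < r \<and> cmod (E - E0) < r'} \<and>
          (\<forall>w E. supn w < r \<longrightarrow> cmod (E - E0) < r' \<longrightarrow>
              cmod (g w E) \<le> 2 / \<mu> * (cmod (E - E0) + C * M2 * (supn w)\<^sup>2)) \<and>
          (\<forall>x0' E. norm (x0' - x0) < r \<longrightarrow> cmod (E - E0) < r' \<longrightarrow> f (cvec x0') = E \<longrightarrow>
              (\<exists>y :: real^'m. norm y \<le> norm (x0' - x0) \<and>
                 cvec x0' = \<phi> (g (cvec y) E) (cvec y))))"
proof -
  define c :: real where "c = 1/(8 * real CARD('n)^2)"
  have c0: "c > 0" by (simp add: c_def)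
  show ?thesis
    apply (unfold Let_def)
    apply (rule exI[of _ c])
    apply (rule conjI)
     apply (rule c0)
    apply (rule exI[of _ "real CARD('n) ^ 4"])
    apply (intro allI impI)
    apply (elim conjE)
    apply (rule final[OF assms c_def])
            apply assumption+
    done
qed

end
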